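(* For every sequent $\Gamma\Rightarrow\Delta$ of $\mathtt{TPDL}$, the following are equivalent: (1) $\Gamma\Rightarrow\Delta$ is provable in $\mathtt{GTPDL}$; (2) $\Gamma\Rightarrow\Delta$ is provable in $\mathtt{CGTPDL}$; (3) $\Gamma\Rightarrow\Delta$ is valid.
   Context: Fix sets $\mathsf{Prop}$ and $\mathsf{AtProg}$. $\mathtt{TPDL}$ formulas/programs: $\varphi ::= \bot \mid p \mid (\varphi\to\varphi) \mid [\pi]\varphi \mid [\pi]^{\leftarrow}\varphi$, $\pi ::= \alpha \mid \pi;\pi \mid \pi\cup\pi \mid \pi^{*} \mid \varphi?$. $[\pi]\Gamma=\{[\pi]\varphi:\varphi\in\Gamma\}$, similarly $[\pi]^{\leftarrow}\Gamma$. A model is $M=(W,(R_\alpha),V)$, $W\neq\emptyset$, $R_\alpha\subseteq W\times W$, $V:W\to\mathcal P(\mathsf{Prop})$; $R_{\pi_0;\pi_1}$ composition, $R_{\pi_0\cup\pi_1}$ union, $R_{\pi^*}$ reflexive–transitive closure of $R_\pi$, $R_{\psi?}=\{(w,w):M,w\models\psi\}$; $M,w\not\models\bot$, $M,w\models p$ iff $p\in V(w)$, $\to$ classical, $M,w\models[\pi]\varphi$ iff $\varphi$ holds at all $v$ with $wR_\pi v$, $M,w\models[\pi]^{\leftarrow}\varphi$ iff $\varphi$ holds at all $v$ with $vR_\pi w$. A sequent is a pair of finite sets of formulas; valid means in every model at every state where all of $\Gamma$ hold, some formula of $\Delta$ holds. Common rules (premises / conclusion): (Ax) / $\Gamma\Rightarrow\Delta$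 with $\Gamma\cap\Delta\neq\emptyset$; ($\bot$) / $\Gamma,\bot\Rightarrow\Delta$; ($\to$L) $\Gamma\Rightarrow\varphi,\Delta$ and $\Gamma,\psi\Rightarrow\Delta$ / $\Gamma,\varphi\to\psi\Rightarrow\Delta$; ($\to$R) $\Gamma,\varphi\Rightarrow\psi,\Delta$ / $\Gamma\Rightarrow\varphi\to\psi,\Delta$; (Wk) $\Gamma\Rightarrow\Delta$ / $\Gamma'\Rightarrow\Delta'$, $\Gamma\subseteq\Gamma'$, $\Delta\subseteq\Delta'$; (Cut) $\Gamma\Rightarrow\varphi,\Delta$ and $\Gamma,\varphi\Rightarrow\Delta$ / $\Gamma\Rightarrow\Delta$; ($[\,]$) $\Gamma\Rightarrow\varphi,[\pi]^{\leftarrow}\Delta$ / $[\pi]\Gamma\Rightarrow[\pi]\varphi,\Delta$; ($[\,]^{\leftarrow}$) $\Gamma\Rightarrow\varphi,[\pi]\Delta$ / $[\pi]^{\leftarrow}\Gamma\Rightarrow[\pi]^{\leftarrow}\varphi,\Delta$; ($[;]$L) $\Gamma,[\pi_0][\pi_1]\varphi\Rightarrow\Delta$ / $\Gamma,[\pi_0;\pi_1]\varphi\Rightarrow\Delta$; ($[;]$R) $\Gamma\Rightarrow[\pi_0][\pi_1]\varphi,\Delta$ / $\Gamma\Rightarrow[\pi_0;\pi_1]\varphi,\Delta$; ($[\cup]$L) $\Gamma,[\pi_0]\varphi,[\pi_1]\varphi\Rightarrow\Delta$ / $\Gamma,[\pi_0\cup\pi_1]\varphi\Rightarrow\Delta$;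 ($[\cup]$R) $\Gamma\Rightarrow\Delta,[\pi_0]\varphi$ and $\Gamma\Rightarrow\Delta,[\pi_1]\varphi$ / $\Gamma\Rightarrow[\pi_0\cup\pi_1]\varphi,\Delta$; ($[*]$L) $\Gamma,\varphi,[\pi][\pi^*]\varphi\Rightarrow\Delta$ / $\Gamma,[\pi^*]\varphi\Rightarrow\Delta$; ($[?]$L) $\Gamma\Rightarrow\varphi,\Delta$ and $\Gamma,\psi\Rightarrow\Delta$ / $\Gamma,[\varphi?]\psi\Rightarrow\Delta$; ($[?]$R) $\Gamma,\varphi\Rightarrow\psi,\Delta$ / $\Gamma\Rightarrow[\varphi?]\psi,\Delta$. $\mathtt{GTPDL}$ = common rules plus ($[*]$R) $\Gamma,\varphi\Rightarrow[\pi]\varphi$ / $[\pi^*]\Gamma,\varphi\Rightarrow[\pi^*]\varphi$; a $\mathtt{GTPDL}$ proof is a finite tree of sequents each node concluding a rule instance with its children as premises (leaves are Ax/$\bot$). $\mathtt{CGTPDL}$ = common rules plus (C-s) $\Gamma\Rightarrow\varphi,\Delta$ and $\Gamma\Rightarrow[\pi][\pi^*]\varphi,\Delta$ / $\Gamma\Rightarrow[\pi^*]\varphi,\Delta$. $\mathtt{CGTPDL}$ proofs: a pre-proof is a finite tree of sequents built from rule instances whose leaves are Ax/$\bot$ instances or buds, together with an assignment to each bud of a companion, an inner node with the same sequent; the derivation graph identifies each bud with its companion; a path is a sequence of nodes each a premise of the previous one's rule instance. A trace following a path $(\Gamma_i\Rightarrow\Delta_i)$ is a sequence $(\tau_i)$,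 $\tau_i\in\Delta_i$, such that: at ($\to$R) with principal $\varphi\to\psi$, $\tau_{i+1}=\tau_i$ or ($\tau_i=\varphi\to\psi$ and $\tau_{i+1}=\psi$); at ($[\,]$) with principal $[\pi]\varphi$, $\tau_i=[\pi]\varphi$, $\tau_{i+1}=\varphi$; at ($[\,]^{\leftarrow}$) with principal $[\pi]^{\leftarrow}\varphi$, $\tau_i=[\pi]^{\leftarrow}\varphi$, $\tau_{i+1}=\varphi$; at ($[;]$R), $\tau_{i+1}=\tau_i$ or $\tau_i=[\pi_0;\pi_1]\varphi$ (principal) and $\tau_{i+1}=[\pi_0][\pi_1]\varphi$; at ($[\cup]$R) going to the premise with $[\pi_j]\varphi$, $\tau_{i+1}=\tau_i$ or $\tau_i$ principal and $\tau_{i+1}=[\pi_j]\varphi$; at ($[?]$R), $\tau_{i+1}=\tau_i$ or $\tau_i=[\varphi?]\psi$ principal and $\tau_{i+1}=\psi$; at (C-s) with principal $[\pi^*]\varphi$, going to the first premise, $\tau_{i+1}=\tau_i$ or ($\tau_i=[\pi^*]\varphi$, $\tau_{i+1}=\varphi$); going to the second premise, $\tau_{i+1}=\tau_i$ or ($\tau_i=[\pi^*]\varphi$, $\tau_{i+1}=[\pi][\pi^*]\varphi$, a progress point); all other rules $\tau_{i+1}=\tau_i$. Global trace condition: every infinite path has a tail followed by a trace with infinitely many progress points. A $\mathtt{CGTPDL}$ proof is a pre-proof satisfying the global trace condition. *)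

theory Defs
  imports Main "HOL-Library.FSet"
begin

datatype ('p, 'a) fm =
    Bot
  | Var 'p
  | Imp "('p, 'a) fm" "('p, 'a) fm"
  | Box "('p, 'a) pg" "('p, 'a) fm"
  | BoxC "('p, 'a) pg" "('p, 'a) fm"
and ('p, 'a) pg =
    At 'a
  | Sq "('p, 'a) pg" "('p, 'a) pg"
  | Ch "('p, 'a) pg" "('p, 'a) pg"
  | Star "('p, 'a) pg"
  | Test "('p, 'a) fm"

type_synonym ('p, 'a) seq = "('p, 'a) fm fset \<times> ('p, 'a) fm fset"

fun sat :: "'w set \<Rightarrow> ('a \<Rightarrow> ('w \<times> 'w) set) \<Rightarrow> ('w \<Rightarrow> 'p set) \<Rightarrow> 'w \<Rightarrow> ('p, 'a) fm \<Rightarrow> bool"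
and rel :: "'w set \<Rightarrow> ('a \<Rightarrow> ('w \<times> 'w) set) \<Rightarrow> ('w \<Rightarrow> 'p set) \<Rightarrow> ('p, 'a) pg \<Rightarrow> ('w \<times> 'w) set"
where
  "sat W R V w Bot = False"
| "sat W R V w (Var p) = (p \<in> V w)"
| "sat W R V w (Imp \<phi> \<psi>) = (sat W R V w \<phi> \<longrightarrow> sat W R V w \<psi>)"
| "sat W R V w (Box \<pi> \<phi>) = (\<forall>v. (w, v) \<in> rel W R V \<pi> \<longrightarrow> sat W R V v \<phi>)"
| "sat W R V w (BoxC \<pi> \<phi>) = (\<forall>v. (v, w) \<in> rel W R V \<pi> \<longrightarrow> sat W R V v \<phi>)"
| "rel W R V (At a) = R a"
| "rel W R V (Sq \<pi>0 \<pi>1) = rel W R V \<pi>0 O rel W R V \<pi>1"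
| "rel W R V (Ch \<pi>0 \<pi>1) = rel W R V \<pi>0 \<union> rel W R V \<pi>1"
| "rel W R V (Star \<pi>) = Id_on W \<union> (rel W R V \<pi>)\<^sup>+"
| "rel W R V (Test \<phi>) = {(w, w) | w. w \<in> W \<and> sat W R V w \<phi>}"

definition valid :: "'w itself \<Rightarrow> ('p, 'a) seq \<Rightarrow> bool" where
  "valid _ S \<longleftrightarrow>
     (\<forall>(W :: 'w set) R V. W \<noteq> {} \<and> (\<forall>a. R a \<subseteq> W \<times> W) \<longrightarrow>
        (\<forall>w \<in> W. (\<forall>\<phi>. \<phi> |\<in>| fst S \<longrightarrow> sat W R V w \<phi>) \<longrightarrow> (\<exists>\<psi>. \<psi> |\<in>| snd S \<and> sat W R V w \<psi>)))"

text \<open>Rule labels; they record the rule and its principal formula.\<close>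
datatype ('p, 'a) rl =
    RAx | RBot | RImpL "('p, 'a) fm" "('p, 'a) fm" | RImpR "('p, 'a) fm" "('p, 'a) fm"
  | RWk | RCut "('p, 'a) fm"
  | RBox "('p, 'a) pg" "('p, 'a) fm" | RBoxC "('p, 'a) pg" "('p, 'a) fm"
  | RSqL "('p, 'a) pg" "('p, 'a) pg" "('p, 'a) fm" | RSqR "('p, 'a) pg" "('p, 'a) pg" "('p, 'a) fm"
  | RChL "('p, 'a) pg" "('p, 'a) pg" "('p, 'a) fm" | RChR "('p, 'a) pg" "('p, 'a) pg" "('p, 'a) fm"
  | RStarL "('p, 'a) pg" "('p, 'a) fm"
  | RTestL "('p, 'a) fm" "('p, 'a) fm" | RTestR "('p, 'a) fm" "('p, 'a) fm"
  | RStarR "('p, 'a) pg" "('p, 'a) fm"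
  | RCs "('p, 'a) pg" "('p, 'a) fm"

text \<open>common r S Ps: S is the conclusion and Ps the (ordered) list of premises of an instance of
  the common rule r.\<close>
inductive common :: "('p, 'a) rl \<Rightarrow> ('p, 'a) seq \<Rightarrow> ('p, 'a) seq list \<Rightarrow> bool" where
  Ax: "\<Gamma> |\<inter>| \<Delta> \<noteq> {||} \<Longrightarrow> common RAx (\<Gamma>, \<Delta>) []"
| BotL: "common RBot (finsert Bot \<Gamma>, \<Delta>) []"
| ImpL: "common (RImpL \<phi> \<psi>) (finsert (Imp \<phi> \<psi>) \<Gamma>, \<Delta>) [(\<Gamma>, finsert \<phi> \<Delta>), (finsert \<psi> \<Gamma>, \<Delta>)]"
| ImpR: "common (RImpR \<phi> \<psi>) (\<Gamma>, finsert (Imp \<phi> \<psi>) \<Delta>) [(finsert \<phi> \<Gamma>, finsert \<psi> \<Delta>)]"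
| Wk: "\<Gamma> |\<subseteq>| \<Gamma>' \<Longrightarrow> \<Delta> |\<subseteq>| \<Delta>' \<Longrightarrow> common RWk (\<Gamma>', \<Delta>') [(\<Gamma>, \<Delta>)]"
| Cut: "common (RCut \<phi>) (\<Gamma>, \<Delta>) [(\<Gamma>, finsert \<phi> \<Delta>), (finsert \<phi> \<Gamma>, \<Delta>)]"
| BoxR: "common (RBox \<pi> \<phi>) (fimage (Box \<pi>) \<Gamma>, finsert (Box \<pi> \<phi>) \<Delta>)
           [(\<Gamma>, finsert \<phi> (fimage (BoxC \<pi>) \<Delta>))]"
| BoxCR: "common (RBoxC \<pi> \<phi>) (fimage (BoxC \<pi>) \<Gamma>, finsert (BoxC \<pi> \<phi>) \<Delta>)
           [(\<Gamma>, finsert \<phi> (fimage (Box \<pi>) \<Delta>))]"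
| SqL: "common (RSqL \<pi>0 \<pi>1 \<phi>) (finsert (Box (Sq \<pi>0 \<pi>1) \<phi>) \<Gamma>, \<Delta>)
          [(finsert (Box \<pi>0 (Box \<pi>1 \<phi>)) \<Gamma>, \<Delta>)]"
| SqR: "common (RSqR \<pi>0 \<pi>1 \<phi>) (\<Gamma>, finsert (Box (Sq \<pi>0 \<pi>1) \<phi>) \<Delta>)
          [(\<Gamma>, finsert (Box \<pi>0 (Box \<pi>1 \<phi>)) \<Delta>)]"
| ChL: "common (RChL \<pi>0 \<pi>1 \<phi>) (finsert (Box (Ch \<pi>0 \<pi>1) \<phi>) \<Gamma>, \<Delta>)
          [(finsert (Box \<pi>0 \<phi>) (finsert (Box \<pi>1 \<phi>) \<Gamma>), \<Delta>)]"
| ChR: "common (RChR \<pi>0 \<pi>1 \<phi>) (\<Gamma>, finsert (Box (Ch \<pi>0 \<pi>1) \<phi>) \<Delta>)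
          [(\<Gamma>, finsert (Box \<pi>0 \<phi>) \<Delta>), (\<Gamma>, finsert (Box \<pi>1 \<phi>) \<Delta>)]"
| StarL: "common (RStarL \<pi> \<phi>) (finsert (Box (Star \<pi>) \<phi>) \<Gamma>, \<Delta>)
          [(finsert \<phi> (finsert (Box \<pi> (Box (Star \<pi>) \<phi>)) \<Gamma>), \<Delta>)]"
| TestL: "common (RTestL \<phi> \<psi>) (finsert (Box (Test \<phi>) \<psi>) \<Gamma>, \<Delta>)
          [(\<Gamma>, finsert \<phi> \<Delta>), (finsert \<psi> \<Gamma>, \<Delta>)]"
| TestR: "common (RTestR \<phi> \<psi>) (\<Gamma>, finsert (Box (Test \<phi>) \<psi>) \<Delta>)
          [(finsert \<phi> \<Gamma>, finsert \<psi> \<Delta>)]"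

inductive ginst :: "('p, 'a) rl \<Rightarrow> ('p, 'a) seq \<Rightarrow> ('p, 'a) seq list \<Rightarrow> bool" where
  gcommon: "common r S Ps \<Longrightarrow> ginst r S Ps"
| StarR: "ginst (RStarR \<pi> \<phi>) (finsert \<phi> (fimage (Box (Star \<pi>)) \<Gamma>), {|Box (Star \<pi>) \<phi>|})
            [(finsert \<phi> \<Gamma>, {|Box \<pi> \<phi>|})]"

inductive cinst :: "('p, 'a) rl \<Rightarrow> ('p, 'a) seq \<Rightarrow> ('p, 'a) seq list \<Rightarrow> bool" where
  ccommon: "common r S Ps \<Longrightarrow> cinst r S Ps"
| Cs: "cinst (RCs \<pi> \<phi>) (\<Gamma>, finsert (Box (Star \<pi>) \<phi>) \<Delta>)
          [(\<Gamma>, finsert \<phi> \<Delta>), (\<Gamma>, finsert (Box \<pi> (Box (Star \<pi>) \<phi>)) \<Delta>)]"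

inductive gprov :: "('p, 'a) seq \<Rightarrow> bool" where
  "ginst r S Ps \<Longrightarrow> (\<forall>P \<in> set Ps. gprov P) \<Longrightarrow> gprov S"

text \<open>A pre-proof is a finite tree with node set N (natural numbers as node names), root rt,
  ordered children lists ch, sequent labels sq, rule labels lb, and a partial companion
  assignment cp (cp n = Some c iff n is a bud with companion c).\<close>

definition tedges :: "nat set \<Rightarrow> (nat \<Rightarrow> nat list) \<Rightarrow> (nat \<times> nat) set" where
  "tedges N ch = {(n, m). n \<in> N \<and> m \<in> set (ch n)}"

definition preproof ::
  "nat set \<Rightarrow> nat \<Rightarrow> (nat \<Rightarrow> nat list) \<Rightarrow> (nat \<Rightarrow> ('p, 'a) seq) \<Rightarrow> (nat \<Rightarrow> ('p, 'a) rl)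
     \<Rightarrow> (nat \<Rightarrow> nat option) \<Rightarrow> bool" where
  "preproof N rt ch sq lb cp \<longleftrightarrow>
     finite N \<and> rt \<in> N \<and>
     \<comment> \<open>tree structure\<close>
     (\<forall>n \<in> N. set (ch n) \<subseteq> N \<and> distinct (ch n)) \<and>
     (\<forall>n \<in> N. rt \<notin> set (ch n)) \<and>
     (\<forall>m \<in> N. m \<noteq> rt \<longrightarrow> (\<exists>!n. n \<in> N \<and> m \<in> set (ch n))) \<and>
     (\<forall>m \<in> N. (rt, m) \<in> (tedges N ch)\<^sup>*) \<and>
     acyclic (tedges N ch) \<and>
     \<comment> \<open>every node is either a bud (leaf with a companion) or concludes a rule instance\<close>
     (\<forall>n \<in> N.
        (case cp n of
           Some c \<Rightarrow> ch n = [] \<and> c \<in> N \<and> cp c = None \<and> ch c \<noteq> [] \<and> sq c = sq n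
         | None \<Rightarrow> cinst (lb n) (sq n) (map sq (ch n))))"

text \<open>In the derivation graph each bud is identified with its companion.\<close>
definition resolve :: "(nat \<Rightarrow> nat option) \<Rightarrow> nat \<Rightarrow> nat" where
  "resolve cp m = (case cp m of Some c \<Rightarrow> c | None \<Rightarrow> m)"

definition inf_path :: "nat set \<Rightarrow> (nat \<Rightarrow> nat list) \<Rightarrow> (nat \<Rightarrow> nat option)
     \<Rightarrow> (nat \<Rightarrow> nat) \<Rightarrow> (nat \<Rightarrow> nat) \<Rightarrow> bool" where
  "inf_path N ch cp f idx \<longleftrightarrow> f 0 \<in> N \<and>
     (\<forall>k. idx k < length (ch (f k)) \<and> f (Suc k) = resolve cp (ch (f k) ! idx k))"

text \<open>Trace steps: tstep r i t t' holds if a trace may go from t (in the conclusion of rule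
  instance r) to t' (in its i-th premise, counting from 0).\<close>
fun tstep :: "('p, 'a) rl \<Rightarrow> nat \<Rightarrow> ('p, 'a) fm \<Rightarrow> ('p, 'a) fm \<Rightarrow> bool" where
  "tstep (RImpR \<phi> \<psi>) i t t' = (t' = t \<or> (t = Imp \<phi> \<psi> \<and> t' = \<psi>))"
| "tstep (RBox \<pi> \<phi>) i t t' = (t = Box \<pi> \<phi> \<and> t' = \<phi>)"
| "tstep (RBoxC \<pi> \<phi>) i t t' = (t = BoxC \<pi> \<phi> \<and> t' = \<phi>)"
| "tstep (RSqR \<pi>0 \<pi>1 \<phi>) i t t' = (t' = t \<or> (t = Box (Sq \<pi>0 \<pi>1) \<phi> \<and> t' = Box \<pi>0 (Box \<pi>1 \<phi>)))"
| "tstep (RChR \<pi>0 \<pi>1 \<phi>) i t t' =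
     (t' = t \<or> (t = Box (Ch \<pi>0 \<pi>1) \<phi> \<and> t' = Box (if i = 0 then \<pi>0 else \<pi>1) \<phi>))"
| "tstep (RTestR \<phi> \<psi>) i t t' = (t' = t \<or> (t = Box (Test \<phi>) \<psi> \<and> t' = \<psi>))"
| "tstep (RCs \<pi> \<phi>) i t t' =
     (t' = t \<or> (t = Box (Star \<pi>) \<phi> \<and> t' = (if i = 0 then \<phi> else Box \<pi> (Box (Star \<pi>) \<phi>))))"
| "tstep r i t t' = (t' = t)"

fun progress :: "('p, 'a) rl \<Rightarrow> nat \<Rightarrow> ('p, 'a) fm \<Rightarrow> ('p, 'a) fm \<Rightarrow> bool" where
  "progress (RCs \<pi> \<phi>) i t t' = (i = 1 \<and> t = Box (Star \<pi>) \<phi> \<and> t' = Box \<pi> (Box (Star \<pi>) \<phi>))"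
| "progress r i t t' = False"

definition global_trace_condition ::
  "nat set \<Rightarrow> (nat \<Rightarrow> nat list) \<Rightarrow> (nat \<Rightarrow> ('p, 'a) seq) \<Rightarrow> (nat \<Rightarrow> ('p, 'a) rl)
     \<Rightarrow> (nat \<Rightarrow> nat option) \<Rightarrow> bool" where
  "global_trace_condition N ch sq lb cp \<longleftrightarrow>
     (\<forall>f idx. inf_path N ch cp f idx \<longrightarrow>
        (\<exists>k0 (\<tau> :: nat \<Rightarrow> ('p, 'a) fm).
           (\<forall>k \<ge> k0. \<tau> k |\<in>| snd (sq (f k)) \<and> tstep (lb (f k)) (idx k) (\<tau> k) (\<tau> (Suc k))) \<and>
           (\<forall>m. \<exists>k \<ge> max m k0. progress (lb (f k)) (idx k) (\<tau> k) (\<tau> (Suc k)))))"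

definition cprov :: "('p, 'a) seq \<Rightarrow> bool" where
  "cprov S \<longleftrightarrow> (\<exists>N rt ch sq lb cp.
      preproof N rt ch sq lb cp \<and> global_trace_condition N ch sq lb cp \<and> sq rt = S)"

end

theory Submission
  imports Defs
begin


lemma rel_sub: "(\<forall>a. R a \<subseteq> W \<times> W) \<Longrightarrow> rel W R V \<pi> \<subseteq> W \<times> W"
proof (induction \<pi> rule: pg.induct[where ?P1.0="\<lambda>_. True"])
  case (Star \<pi>)
  then show ?case using trancl_subset_Sigma[of "rel W R V \<pi>" W] by auto
qed auto

inductive fail :: "'w set \<Rightarrow> ('a \<Rightarrow> ('w \<times> 'w) set) \<Rightarrow> ('w \<Rightarrow> 'p set) \<Rightarrow> ('p,'a) fm \<Rightarrow> 'w \<Rightarrow> nat \<Rightarrow> bool"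
  for W R V where
  fBot: "fail W R V Bot w k"
| fVar: "p \<notin> V w \<Longrightarrow> fail W R V (Var p) w k"
| fImp: "sat W R V w \<phi> \<Longrightarrow> fail W R V \<psi> w k \<Longrightarrow> fail W R V (Imp \<phi> \<psi>) w k"
| fBoxC: "(v, w) \<in> rel W R V \<pi> \<Longrightarrow> fail W R V \<phi> v k \<Longrightarrow> fail W R V (BoxC \<pi> \<phi>) w k"
| fAt: "(w, v) \<in> R a \<Longrightarrow> fail W R V \<phi> v k \<Longrightarrow> fail W R V (Box (At a) \<phi>) w k"
| fSq: "fail W R V (Box \<pi>0 (Box \<pi>1 \<phi>)) w k \<Longrightarrow> fail W R V (Box (Sq \<pi>0 \<pi>1) \<phi>) w k"
| fCh0: "fail W R V (Box \<pi>0 \<phi>) w k \<Longrightarrow> fail W R V (Box (Ch \<pi>0 \<pi>1) \<phi>) w k"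
| fCh1: "fail W R V (Box \<pi>1 \<phi>) w k \<Longrightarrow> fail W R V (Box (Ch \<pi>0 \<pi>1) \<phi>) w k"
| fTest: "w \<in> W \<Longrightarrow> sat W R V w \<psi> \<Longrightarrow> fail W R V \<phi> w k \<Longrightarrow> fail W R V (Box (Test \<psi>) \<phi>) w k"
| fStar0: "w \<in> W \<Longrightarrow> fail W R V \<phi> w k \<Longrightarrow> fail W R V (Box (Star \<pi>) \<phi>) w k"
| fStarS: "fail W R V (Box \<pi> (Box (Star \<pi>) \<phi>)) w k \<Longrightarrow> fail W R V (Box (Star \<pi>) \<phi>) w (Suc k)"

inductive_cases fail_ImpE: "fail W R V (Imp \<phi> \<psi>) w k"
inductive_cases fail_BoxCE: "fail W R V (BoxC \<pi> \<phi>) w k"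
inductive_cases fail_AtE: "fail W R V (Box (At a) \<phi>) w k"
inductive_cases fail_SqE: "fail W R V (Box (Sq \<pi>0 \<pi>1) \<phi>) w k"
inductive_cases fail_ChE: "fail W R V (Box (Ch \<pi>0 \<pi>1) \<phi>) w k"
inductive_cases fail_TestE: "fail W R V (Box (Test \<psi>) \<phi>) w k"
inductive_cases fail_StarE: "fail W R V (Box (Star \<pi>) \<phi>) w k"

lemma fail_mono: "fail W R V t w k \<Longrightarrow> k \<le> k' \<Longrightarrow> fail W R V t w k'"
proof (induction arbitrary: k' rule: fail.induct)
  case (fStarS \<pi> \<phi> w k)
  then obtain k'' where "k' = Suc k''" "k \<le> k''" by (cases k') auto
  then show ?case using fStarS by (auto intro: fail.intros)
qed (auto intro: fail.intros)

lemma star_step: "(w, v1) \<in> r \<Longrightarrow> (v1, v) \<in> Id_on W \<union> r\<^sup>+ \<Longrightarrow> (w, v) \<in> Id_on W \<union> r\<^sup>+"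
proof -
  assume a: "(w, v1) \<in> r" "(v1, v) \<in> Id_on W \<union> r\<^sup>+"
  from a(2) have "(v1, v) \<in> r\<^sup>*" by (auto dest: trancl_into_rtrancl)
  with a(1) have "(w, v) \<in> r\<^sup>+" by (rule rtrancl_into_trancl2)
  then show ?thesis by blast
qed

lemma fail_sound: "fail W R V t w k \<Longrightarrow> \<not> sat W R V w t"
proof (induction rule: fail.induct)
  case (fStarS \<pi> \<phi> w k)
  then obtain v1 v where "(w, v1) \<in> rel W R V \<pi>" "(v1, v) \<in> rel W R V (Star \<pi>)" "\<not> sat W R V v \<phi>"
    by auto
  then show ?case using star_step[of w v1 "rel W R V \<pi>" v W] by auto
qed auto

lemma fail_star_witness:
  assumes IH: "\<And>\<phi> w k. fail W R V (Box \<pi> \<phi>) w k \<Longrightarrow> \<exists>v. (w, v) \<in> rel W R V \<pi> \<and> fail W R V \<phi> v k"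
  shows "fail W R V (Box (Star \<pi>) \<phi>) w k \<Longrightarrow> \<exists>v. (w, v) \<in> rel W R V (Star \<pi>) \<and> fail W R V \<phi> v k"
proof (induction k arbitrary: w)
  case 0
  then show ?case by (auto elim: fail_StarE)
next
  case (Suc k)
  from Suc.prems have "(w \<in> W \<and> fail W R V \<phi> w (Suc k)) \<or> fail W R V (Box \<pi> (Box (Star \<pi>) \<phi>)) w k"
    by (auto elim: fail_StarE)
  then show ?case
  proof
    assume "w \<in> W \<and> fail W R V \<phi> w (Suc k)"
    then show ?thesis using Id_onI[of w W] by auto
  next
    assume "fail W R V (Box \<pi> (Box (Star \<pi>) \<phi>)) w k"
    with IH obtain v1 where v1: "(w,v1) \<in> rel W R V \<pi>" "fail W R V (Box (Star \<pi>) \<phi>) v1 k" by blast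
    from Suc.IH[OF v1(2)] obtain v where v: "(v1,v) \<in> rel W R V (Star \<pi>)" "fail W R V \<phi> v k" by blast
    have "(w,v) \<in> rel W R V (Star \<pi>)" using star_step[of w v1 "rel W R V \<pi>" v W] v1(1) v(1) by simp
    moreover have "fail W R V \<phi> v (Suc k)" using v(2) fail_mono by fastforce
    ultimately show ?thesis by blast
  qed
qed

lemma fail_box_witness:
  "fail W R V (Box \<pi> \<phi>) w k \<Longrightarrow> \<exists>v. (w, v) \<in> rel W R V \<pi> \<and> fail W R V \<phi> v k"
proof (induction \<pi> arbitrary: \<phi> w k rule: pg.induct[where ?P1.0="\<lambda>_. True"])
  case (At a) then show ?case by (auto elim: fail_AtE)
next
  case (Sq x1 x2)
  from Sq(3) have "fail W R V (Box x1 (Box x2 \<phi>)) w k" by (auto elim: fail_SqE)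
  then obtain u where u: "(w,u) \<in> rel W R V x1" "fail W R V (Box x2 \<phi>) u k" using Sq by blast
  then obtain v where "(u,v) \<in> rel W R V x2" "fail W R V \<phi> v k" using Sq by blast
  then show ?case using u by auto
next
  case (Ch x1 x2)
  from Ch(3) show ?case
    by (elim fail_ChE) (use Ch(1)[of \<phi> w k] Ch(2)[of \<phi> w k] in auto)
next
  case (Test x)
  then show ?case by (auto elim: fail_TestE)
next
  case (Star \<pi>)
  then show ?case using fail_star_witness[of W R V \<pi>, OF Star(1)] Star(2) by blast
qed auto

context
  fixes W :: "'w set" and R :: "'a \<Rightarrow> ('w \<times> 'w) set" and V :: "'w \<Rightarrow> 'p set"
  assumes RW: "\<forall>a. R a \<subseteq> W \<times> W"
begin

lemma fail_exists_prog:
  "(w, v) \<in> rel W R V \<pi> \<Longrightarrow> fail W R V \<phi> v k \<Longrightarrow> \<exists>k'. fail W R V (Box \<pi> \<phi>) w k'"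
proof (induction \<pi> arbitrary: w v \<phi> k rule: pg.induct[where ?P1.0="\<lambda>_. True"])
  case (At x)
  from At(1) have "(w,v) \<in> R x" by simp
  from fAt[OF this At(2)] show ?case by blast
next
  case (Sq x1 x2)
  from Sq(3) have "(w,v) \<in> rel W R V x1 O rel W R V x2" by simp
  then obtain u where u: "(w,u) \<in> rel W R V x1" "(u,v) \<in> rel W R V x2" by blast
  obtain k1 where "fail W R V (Box x2 \<phi>) u k1" using Sq(2)[OF u(2) Sq(4)] by blast
  then obtain k2 where "fail W R V (Box x1 (Box x2 \<phi>)) w k2" using Sq(1)[OF u(1)] by blast
  from fSq[OF this] show ?case by blast
next
  case (Ch x1 x2)
  from Ch(3) have "(w,v) \<in> rel W R V x1 \<or> (w,v) \<in> rel W R V x2" by simp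
  then show ?case
  proof
    assume "(w,v) \<in> rel W R V x1"
    from Ch(1)[OF this Ch(4)] obtain k' where "fail W R V (Box x1 \<phi>) w k'" by blast
    from fCh0[OF this] show ?case by blast
  next
    assume "(w,v) \<in> rel W R V x2"
    from Ch(2)[OF this Ch(4)] obtain k' where "fail W R V (Box x2 \<phi>) w k'" by blast
    from fCh1[OF this] show ?case by blast
  qed
next
  case (Test x)
  from Test(2) have "w = v" "w \<in> W" "sat W R V w x" by auto
  from fTest[OF this(2,3)] Test(3) \<open>w = v\<close> show ?case by blast
next
  case (Star \<pi>)
  have vW: "v \<in> W" using rel_sub[OF RW] Star(2) by blast
  have base: "fail W R V (Box (Star \<pi>) \<phi>) v k" using vW Star(3) by (rule fStar0)
  show ?case
  proof (cases "w = v")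
    case True then show ?thesis using base by blast
  next
    case False
    from Star(2) have "(w, v) \<in> Id_on W \<or> (w, v) \<in> (rel W R V \<pi>)\<^sup>+" by simp
    with False have "(w, v) \<in> (rel W R V \<pi>)\<^sup>+" by blast
    then show ?thesis
    proof (induction rule: converse_trancl_induct)
      case (base y)
      from Star(1)[OF base.hyps \<open>fail W R V (Box (Star \<pi>) \<phi>) v k\<close>] obtain k' where "fail W R V (Box \<pi> (Box (Star \<pi>) \<phi>)) y k'" by blast
      from fStarS[OF this] show ?case by blast
    next
      case (step y z)
      from step.IH obtain k' where "fail W R V (Box (Star \<pi>) \<phi>) z k'" by blast
      from Star(1)[OF step.hyps(1) this] obtain k'' where "fail W R V (Box \<pi> (Box (Star \<pi>) \<phi>)) y k''" by blast
      from fStarS[OF this] show ?case by blast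
    qed
  qed
qed (rule TrueI)+

lemma fail_exists: "w \<in> W \<Longrightarrow> \<not> sat W R V w \<theta> \<Longrightarrow> \<exists>k. fail W R V \<theta> w k"
proof (induction \<theta> arbitrary: w rule: fm.induct[where ?P2.0="\<lambda>_. True"])
  case (Box \<pi> \<phi>)
  then obtain v where v: "(w,v) \<in> rel W R V \<pi>" "\<not> sat W R V v \<phi>" by auto
  have "v \<in> W" using rel_sub[OF RW] v(1) by blast
  then obtain k where "fail W R V \<phi> v k" using Box v by blast
  then show ?case using fail_exists_prog v(1) by blast
next
  case (BoxC \<pi> \<phi>)
  then obtain v where v: "(v,w) \<in> rel W R V \<pi>" "\<not> sat W R V v \<phi>" by auto
  have "v \<in> W" using rel_sub[OF RW] v(1) by blast
  then obtain k where "fail W R V \<phi> v k" using BoxC v by blast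
  from fBoxC[OF v(1) this] show ?case by blast
next
  case (Imp x1 x2)
  then obtain k where "fail W R V x2 w k" by auto
  then show ?case using Imp by (meson fImp sat.simps(3))
next
  case Bot
  show ?case by (rule exI, rule fBot)
next
  case (Var p)
  then have "p \<notin> V w" by simp
  then show ?case by (intro exI fVar)
qed (rule TrueI)+

end


definition fls :: "'w set \<Rightarrow> ('a \<Rightarrow> ('w \<times> 'w) set) \<Rightarrow> ('w \<Rightarrow> 'p set) \<Rightarrow> ('p,'a) seq \<Rightarrow> 'w \<Rightarrow> bool" where
  "fls W R V S w \<longleftrightarrow> w \<in> W \<and> (\<forall>\<phi>. \<phi> |\<in>| fst S \<longrightarrow> sat W R V w \<phi>) \<and> (\<forall>\<psi>. \<psi> |\<in>| snd S \<longrightarrow> \<not> sat W R V w \<psi>)"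

definition good :: "'w set \<Rightarrow> ('a \<Rightarrow> ('w \<times> 'w) set) \<Rightarrow> ('w \<Rightarrow> 'p set) \<Rightarrow> ('p,'a) rl \<Rightarrow> ('p,'a) seq \<Rightarrow> nat \<Rightarrow> 'w \<Rightarrow> 'w \<Rightarrow> bool" where
  "good W R V r S i w w' \<longleftrightarrow>
     (\<forall>t t' j. tstep r i t t' \<longrightarrow> t |\<in>| snd S \<longrightarrow> fail W R V t w j \<longrightarrow> fail W R V t' w' j) \<and>
     (\<forall>t t' j. progress r i t t' \<longrightarrow> fail W R V t w j \<longrightarrow> (\<exists>j'<j. fail W R V t' w' j'))"

lemma good_triv: "(\<And>t t'. tstep r i t t' \<Longrightarrow> t' = t) \<Longrightarrow> (\<And>t t'. \<not> progress r i t t') \<Longrightarrow> good W R V r S i w w"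
  unfolding good_def by blast

context
  fixes W :: "'w set" and R :: "'a \<Rightarrow> ('w \<times> 'w) set" and V :: "'w \<Rightarrow> 'p set"
  assumes RW: "\<forall>a. R a \<subseteq> W \<times> W"
begin

lemma least_fail:
  assumes "w \<in> W" "\<not> sat W R V w t"
  shows "\<exists>j0. fail W R V t w j0 \<and> (\<forall>j. fail W R V t w j \<longrightarrow> j0 \<le> j)"
proof -
  obtain j where "fail W R V t w j" using fail_exists[OF RW assms] by blast
  then show ?thesis by (metis LeastI Least_le)
qed

lemma local_common:
  assumes c: "common r S Ps" and F: "fls W R V S w"
  shows "\<exists>i w'. i < length Ps \<and> fls W R V (Ps ! i) w' \<and> good W R V r S i w w'"
  using c
proof cases
  case (Ax \<Gamma> \<Delta>)
  then obtain x where "x |\<in>| \<Gamma>" "x |\<in>| \<Delta>" by blast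
  then show ?thesis using F Ax by (auto simp: fls_def)
next
  case (BotL \<Gamma> \<Delta>)
  then show ?thesis using F by (auto simp: fls_def)
next
  case (ImpL \<phi> \<psi> \<Gamma> \<Delta>)
  have g: "good W R V r S i w w" for i using ImpL by (intro good_triv) auto
  show ?thesis
  proof (cases "sat W R V w \<phi>")
    case True
    then show ?thesis using F ImpL g by (intro exI[of _ 1] exI[of _ w]) (auto simp: fls_def)
  next
    case False
    then show ?thesis using F ImpL g by (intro exI[of _ 0] exI[of _ w]) (auto simp: fls_def)
  qed
next
  case (ImpR \<phi> \<psi> \<Gamma> \<Delta>)
  have g: "good W R V r S 0 w w" using ImpR unfolding good_def by (auto elim: fail_ImpE)
  show ?thesis using F ImpR g by (intro exI[of _ 0] exI[of _ w]) (auto simp: fls_def)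
next
  case (Wk \<Gamma> \<Gamma>' \<Delta> \<Delta>')
  have g: "good W R V r S 0 w w" using Wk by (intro good_triv) auto
  show ?thesis using F Wk g by (intro exI[of _ 0] exI[of _ w]) (auto simp: fls_def)
next
  case (Cut \<phi> \<Gamma> \<Delta>)
  have g: "good W R V r S i w w" for i using Cut by (intro good_triv) auto
  show ?thesis
  proof (cases "sat W R V w \<phi>")
    case True
    then show ?thesis using F Cut g by (intro exI[of _ 1] exI[of _ w]) (auto simp: fls_def)
  next
    case False
    then show ?thesis using F Cut g by (intro exI[of _ 0] exI[of _ w]) (auto simp: fls_def)
  qed
next
  case (BoxR \<pi> \<phi> \<Gamma> \<Delta>)
  have wW: "w \<in> W" and nf: "\<not> sat W R V w (Box \<pi> \<phi>)" using F BoxR by (auto simp: fls_def)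
  obtain j0 where j0: "fail W R V (Box \<pi> \<phi>) w j0" "\<And>j. fail W R V (Box \<pi> \<phi>) w j \<Longrightarrow> j0 \<le> j"
    using least_fail[OF wW nf] by blast
  obtain v where v: "(w,v) \<in> rel W R V \<pi>" "fail W R V \<phi> v j0" using fail_box_witness[OF j0(1)] by blast
  have vW: "v \<in> W" using rel_sub[OF RW] v(1) by blast
  have g: "good W R V r S 0 w v" using BoxR j0(2) v(2) unfolding good_def by (auto intro: fail_mono)
  have fl: "fls W R V (Ps ! 0) v"
    using F BoxR vW v fail_sound[OF v(2)] unfolding fls_def by force
  show ?thesis using g fl BoxR by auto
next
  case (BoxCR \<pi> \<phi> \<Gamma> \<Delta>)
  have wW: "w \<in> W" and nf: "\<not> sat W R V w (BoxC \<pi> \<phi>)" using F BoxCR by (auto simp: fls_def)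
  obtain j0 where j0: "fail W R V (BoxC \<pi> \<phi>) w j0" "\<And>j. fail W R V (BoxC \<pi> \<phi>) w j \<Longrightarrow> j0 \<le> j"
    using least_fail[OF wW nf] by blast
  obtain v where v: "(v,w) \<in> rel W R V \<pi>" "fail W R V \<phi> v j0" using j0(1) by (auto elim: fail_BoxCE)
  have vW: "v \<in> W" using rel_sub[OF RW] v(1) by blast
  have g: "good W R V r S 0 w v" using BoxCR j0(2) v(2) unfolding good_def by (auto intro: fail_mono)
  have fl: "fls W R V (Ps ! 0) v"
    using F BoxCR vW v fail_sound[OF v(2)] unfolding fls_def by force
  show ?thesis using g fl BoxCR by auto
next
  case (SqL \<pi>0 \<pi>1 \<phi> \<Gamma> \<Delta>)
  have g: "good W R V r S 0 w w" using SqL by (intro good_triv) auto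
  show ?thesis using F SqL g by (intro exI[of _ 0] exI[of _ w]) (auto simp: fls_def)
next
  case (SqR \<pi>0 \<pi>1 \<phi> \<Gamma> \<Delta>)
  have g: "good W R V r S 0 w w" using SqR unfolding good_def by (auto elim: fail_SqE)
  show ?thesis using F SqR g by (intro exI[of _ 0] exI[of _ w]) (auto simp: fls_def; blast)
next
  case (ChL \<pi>0 \<pi>1 \<phi> \<Gamma> \<Delta>)
  have g: "good W R V r S 0 w w" using ChL by (intro good_triv) auto
  show ?thesis using F ChL g by (intro exI[of _ 0] exI[of _ w]) (auto simp: fls_def)
next
  case (ChR \<pi>0 \<pi>1 \<phi> \<Gamma> \<Delta>)
  have wW: "w \<in> W" and nf: "\<not> sat W R V w (Box (Ch \<pi>0 \<pi>1) \<phi>)" using F ChR by (auto simp: fls_def)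
  obtain j0 where j0: "fail W R V (Box (Ch \<pi>0 \<pi>1) \<phi>) w j0" "\<And>j. fail W R V (Box (Ch \<pi>0 \<pi>1) \<phi>) w j \<Longrightarrow> j0 \<le> j"
    using least_fail[OF wW nf] by blast
  from j0(1) have "fail W R V (Box \<pi>0 \<phi>) w j0 \<or> fail W R V (Box \<pi>1 \<phi>) w j0" by (auto elim: fail_ChE)
  then show ?thesis
  proof
    assume a: "fail W R V (Box \<pi>0 \<phi>) w j0"
    have g: "good W R V r S 0 w w" using ChR j0(2) a unfolding good_def by (auto intro: fail_mono)
    have fl: "fls W R V (Ps ! 0) w" using F ChR fail_sound[OF a] unfolding fls_def by auto
    show ?thesis using g fl ChR by (intro exI[of _ 0] exI[of _ w]) auto
  next
    assume a: "fail W R V (Box \<pi>1 \<phi>) w j0"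
    have g: "good W R V r S 1 w w" using ChR j0(2) a unfolding good_def by (auto intro: fail_mono)
    have fl: "fls W R V (Ps ! 1) w" using F ChR fail_sound[OF a] unfolding fls_def by auto
    show ?thesis using g fl ChR by (intro exI[of _ 1] exI[of _ w]) auto
  qed
next
  case (StarL \<pi> \<phi> \<Gamma> \<Delta>)
  have g: "good W R V r S 0 w w" using StarL by (intro good_triv) auto
  have wW: "w \<in> W" using F by (simp add: fls_def)
  have "sat W R V w (Box (Star \<pi>) \<phi>)" using F StarL by (simp add: fls_def)
  then have "sat W R V w \<phi>" "sat W R V w (Box \<pi> (Box (Star \<pi>) \<phi>))"
    using wW star_step[of w _ "rel W R V \<pi>" _ W] by auto
  then show ?thesis using F StarL g by (intro exI[of _ 0] exI[of _ w]) (auto simp: fls_def)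
next
  case (TestL \<phi> \<psi> \<Gamma> \<Delta>)
  have g: "good W R V r S i w w" for i using TestL by (intro good_triv) auto
  have wW: "w \<in> W" using F by (simp add: fls_def)
  show ?thesis
  proof (cases "sat W R V w \<phi>")
    case True
    then have "sat W R V w \<psi>" using F TestL wW by (auto simp: fls_def)
    then show ?thesis using F TestL g by (intro exI[of _ 1] exI[of _ w]) (auto simp: fls_def)
  next
    case False
    then show ?thesis using F TestL g by (intro exI[of _ 0] exI[of _ w]) (auto simp: fls_def)
  qed
next
  case (TestR \<phi> \<psi> \<Gamma> \<Delta>)
  have g: "good W R V r S 0 w w" using TestR unfolding good_def by (auto elim: fail_TestE)
  show ?thesis using F TestR g by (intro exI[of _ 0] exI[of _ w]) (auto simp: fls_def)
qed

lemma local_Cs: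
  assumes F: "fls W R V (\<Gamma>, finsert (Box (Star \<pi>) \<phi>) \<Delta>) w"
  shows "\<exists>i w'. i < length [(\<Gamma>, finsert \<phi> \<Delta>), (\<Gamma>, finsert (Box \<pi> (Box (Star \<pi>) \<phi>)) \<Delta>)] \<and>
     fls W R V ([(\<Gamma>, finsert \<phi> \<Delta>), (\<Gamma>, finsert (Box \<pi> (Box (Star \<pi>) \<phi>)) \<Delta>)] ! i) w' \<and>
     good W R V (RCs \<pi> \<phi>) (\<Gamma>, finsert (Box (Star \<pi>) \<phi>) \<Delta>) i w w'"
proof -
  have wW: "w \<in> W" and nf: "\<not> sat W R V w (Box (Star \<pi>) \<phi>)" using F by (auto simp: fls_def)
  obtain j0 where j0: "fail W R V (Box (Star \<pi>) \<phi>) w j0" "\<And>j. fail W R V (Box (Star \<pi>) \<phi>) w j \<Longrightarrow> j0 \<le> j"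
    using least_fail[OF wW nf] by blast
  show ?thesis
  proof (cases "fail W R V \<phi> w j0")
    case True
    have g: "good W R V (RCs \<pi> \<phi>) (\<Gamma>, finsert (Box (Star \<pi>) \<phi>) \<Delta>) 0 w w"
      using j0(2) True unfolding good_def by (auto intro: fail_mono)
    have fl: "fls W R V (\<Gamma>, finsert \<phi> \<Delta>) w" using F fail_sound[OF True] unfolding fls_def by auto
    show ?thesis using g fl by (intro exI[of _ 0] exI[of _ w]) auto
  next
    case False
    with j0(1) obtain j1 where j1: "j0 = Suc j1" "fail W R V (Box \<pi> (Box (Star \<pi>) \<phi>)) w j1"
      by (auto elim: fail_StarE)
    have g: "good W R V (RCs \<pi> \<phi>) (\<Gamma>, finsert (Box (Star \<pi>) \<phi>) \<Delta>) 1 w w"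
      unfolding good_def
    proof (intro conjI allI impI)
      fix t t' j assume "tstep (RCs \<pi> \<phi>) 1 t t'" "fail W R V t w j"
      then have d: "t' = t \<or> (t = Box (Star \<pi>) \<phi> \<and> t' = Box \<pi> (Box (Star \<pi>) \<phi>))" and ft: "fail W R V t w j" by simp_all
      from d show "fail W R V t' w j"
      proof
        assume "t' = t" then show ?thesis using ft by simp
      next
        assume "t = Box (Star \<pi>) \<phi> \<and> t' = Box \<pi> (Box (Star \<pi>) \<phi>)"
        then have "Suc j1 \<le> j" using j0(2) j1(1) ft by auto
        then show ?thesis using fail_mono[OF j1(2)] \<open>t = Box (Star \<pi>) \<phi> \<and> t' = Box \<pi> (Box (Star \<pi>) \<phi>)\<close> by auto
      qed
    next
      fix t t' j assume "progress (RCs \<pi> \<phi>) 1 t t'" "fail W R V t w j"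
      then show "\<exists>j'<j. fail W R V t' w j'" using j0(2)[of j] j1 by (intro exI[of _ j1]) auto
    qed
    have fl: "fls W R V (\<Gamma>, finsert (Box \<pi> (Box (Star \<pi>) \<phi>)) \<Delta>) w" using F fail_sound[OF j1(2)] unfolding fls_def by auto
    show ?thesis using g fl by (intro exI[of _ 1] exI[of _ w]) auto
  qed
qed

lemma local_step:
  assumes "cinst r S Ps" "fls W R V S w"
  shows "\<exists>i w'. i < length Ps \<and> fls W R V (Ps ! i) w' \<and> good W R V r S i w w'"
  using assms(1)
proof cases
  case ccommon
  then show ?thesis using local_common assms(2) by blast
next
  case (Cs \<Gamma> \<pi> \<phi> \<Delta>)
  then show ?thesis using local_Cs assms(2) by blast
qed

end


lemma pp_nodes:
  assumes pp: "preproof N rt ch sq lb cp" and m: "m \<in> N"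
  shows "case cp m of Some c \<Rightarrow> ch m = [] \<and> c \<in> N \<and> cp c = None \<and> ch c \<noteq> [] \<and> sq c = sq m
         | None \<Rightarrow> cinst (lb m) (sq m) (map sq (ch m))"
proof -
  have "\<forall>n \<in> N. (case cp n of Some c \<Rightarrow> ch n = [] \<and> c \<in> N \<and> cp c = None \<and> ch c \<noteq> [] \<and> sq c = sq n
         | None \<Rightarrow> cinst (lb n) (sq n) (map sq (ch n)))" using pp unfolding preproof_def by blast
  then show ?thesis using m by blast
qed

lemma resolve_ok:
  assumes pp: "preproof N rt ch sq lb cp" and m: "m \<in> N"
  shows "resolve cp m \<in> N \<and> cp (resolve cp m) = None \<and> sq (resolve cp m) = sq m"
proof (cases "cp m")
  case None then show ?thesis using m by (simp add: resolve_def)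
next
  case (Some c)
  then show ?thesis using pp_nodes[OF pp m] by (simp add: resolve_def)
qed

lemma node_ok:
  assumes pp: "preproof N rt ch sq lb cp" and n: "n \<in> N" "cp n = None"
  shows "cinst (lb n) (sq n) (map sq (ch n)) \<and> set (ch n) \<subseteq> N"
proof -
  have "\<forall>n\<in>N. set (ch n) \<subseteq> N \<and> distinct (ch n)" using pp unfolding preproof_def by blast
  then show ?thesis using pp_nodes[OF pp n(1)] n by simp
qed

theorem cprov_sound:
  assumes "cprov S" shows "valid TYPE('w) S"
  unfolding valid_def
proof (intro allI impI ballI)
  fix W :: "'w set" and R V w0
  assume MW: "W \<noteq> {} \<and> (\<forall>a. R a \<subseteq> W \<times> W)" and w0: "w0 \<in> W" and G: "\<forall>\<phi>. \<phi> |\<in>| fst S \<longrightarrow> sat W R V w0 \<phi>"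
  have RW: "\<forall>a. R a \<subseteq> W \<times> W" using MW by blast
  show "\<exists>\<psi>. \<psi> |\<in>| snd S \<and> sat W R V w0 \<psi>"
  proof (rule ccontr)
    assume "\<not> ?thesis"
    then have F0: "fls W R V S w0" using w0 G by (auto simp: fls_def)
    obtain N rt ch sq lb cp where pp: "preproof N rt ch sq lb cp" and gtc: "global_trace_condition N ch sq lb cp"
      and rt: "sq rt = S" using assms unfolding cprov_def by blast
    have rtN: "rt \<in> N" using pp unfolding preproof_def by blast
    define C where "C = (\<lambda>n w. SOME p. fst p < length (ch n) \<and> fls W R V (sq (ch n ! fst p)) (snd p) \<and> good W R V (lb n) (sq n) (fst p) w (snd p))"
    have Cprop: "fst (C n w) < length (ch n) \<and> fls W R V (sq (ch n ! fst (C n w))) (snd (C n w)) \<and> good W R V (lb n) (sq n) (fst (C n w)) w (snd (C n w))"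
      if nn: "n \<in> N" "cp n = None" and fw: "fls W R V (sq n) w" for n w
    proof -
      have ci: "cinst (lb n) (sq n) (map sq (ch n))" using node_ok[OF pp nn] by blast
      obtain i w' where "i < length (map sq (ch n))" "fls W R V (map sq (ch n) ! i) w'" "good W R V (lb n) (sq n) i w w'"
        using local_step[OF RW ci fw] by blast
      then have "\<exists>p. fst p < length (ch n) \<and> fls W R V (sq (ch n ! fst p)) (snd p) \<and> good W R V (lb n) (sq n) (fst p) w (snd p)"
        by (intro exI[of _ "(i, w')"]) auto
      then show ?thesis unfolding C_def by (rule someI_ex)
    qed
    define g where "g = rec_nat (resolve cp rt, w0) (\<lambda>k p. (resolve cp (ch (fst p) ! fst (C (fst p) (snd p))), snd (C (fst p) (snd p))))"
    define f where "f = (\<lambda>k. fst (g k))"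
    define ws where "ws = (\<lambda>k. snd (g k))"
    define idx where "idx = (\<lambda>k. fst (C (f k) (ws k)))"
    have g0: "f 0 = resolve cp rt" "ws 0 = w0" by (simp_all add: f_def ws_def g_def)
    have gS: "f (Suc k) = resolve cp (ch (f k) ! idx k)" "ws (Suc k) = snd (C (f k) (ws k))" for k
      by (simp_all add: f_def ws_def g_def idx_def)
    have inv: "f k \<in> N \<and> cp (f k) = None \<and> fls W R V (sq (f k)) (ws k)" for k
    proof (induction k)
      case 0
      then show ?case using resolve_ok[OF pp rtN] F0 rt g0 by simp
    next
      case (Suc k)
      have cp: "idx k < length (ch (f k))" "fls W R V (sq (ch (f k) ! idx k)) (ws (Suc k))"
        using Cprop[of "f k" "ws k"] Suc gS unfolding idx_def by auto
      have "ch (f k) ! idx k \<in> N" using node_ok[OF pp] Suc cp(1) by (meson nth_mem subsetD)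
      then show ?case using resolve_ok[OF pp] cp(2) gS by simp
    qed
    have stp: "idx k < length (ch (f k)) \<and> good W R V (lb (f k)) (sq (f k)) (idx k) (ws k) (ws (Suc k))" for k
    proof -
      have i: "f k \<in> N" "cp (f k) = None" "fls W R V (sq (f k)) (ws k)" using inv[of k] by auto
      have c: "fst (C (f k) (ws k)) < length (ch (f k)) \<and> good W R V (lb (f k)) (sq (f k)) (fst (C (f k) (ws k))) (ws k) (snd (C (f k) (ws k)))"
        using Cprop[OF i] by blast
      show ?thesis unfolding idx_def gS(2)[of k] using c by blast
    qed
    have ip: "inf_path N ch cp f idx" unfolding inf_path_def using inv stp gS by blast
    obtain k0 \<tau> where H1: "\<forall>k\<ge>k0. \<tau> k |\<in>| snd (sq (f k)) \<and> tstep (lb (f k)) (idx k) (\<tau> k) (\<tau> (Suc k))"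
      and H2: "\<forall>m. \<exists>k\<ge>max m k0. progress (lb (f k)) (idx k) (\<tau> k) (\<tau> (Suc k))"
      using gtc ip unfolding global_trace_condition_def by blast
    have ex: "\<exists>j. fail W R V (\<tau> k) (ws k) j" if "k \<ge> k0" for k
    proof -
      have "\<not> sat W R V (ws k) (\<tau> k)" "ws k \<in> W" using H1 that inv[of k] unfolding fls_def by auto
      then show ?thesis using fail_exists[OF RW] by blast
    qed
    define \<mu> where "\<mu> = (\<lambda>k. LEAST j. fail W R V (\<tau> k) (ws k) j)"
    have \<mu>f: "fail W R V (\<tau> k) (ws k) (\<mu> k)" if "k \<ge> k0" for k
      unfolding \<mu>_def using ex[OF that] by (rule LeastI_ex)
    have dec: "\<mu> (Suc k) \<le> \<mu> k" if "k \<ge> k0" for k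
    proof -
      have "fail W R V (\<tau> (Suc k)) (ws (Suc k)) (\<mu> k)"
        using stp[of k] H1 that \<mu>f[OF that] unfolding good_def by blast
      then show ?thesis unfolding \<mu>_def by (rule Least_le)
    qed
    have sdec: "\<mu> (Suc k) < \<mu> k" if kk: "k \<ge> k0" and pr: "progress (lb (f k)) (idx k) (\<tau> k) (\<tau> (Suc k))" for k
    proof -
      obtain j' where "j' < \<mu> k" "fail W R V (\<tau> (Suc k)) (ws (Suc k)) j'"
        using stp[of k] pr \<mu>f[OF kk] unfolding good_def by blast
      then show ?thesis unfolding \<mu>_def by (meson Least_le le_less_trans)
    qed
    have mono: "\<mu> b \<le> \<mu> a" if "k0 \<le> a" "a \<le> b" for a b
      using that(2)
    proof (induction b rule: dec_induct)
      case base then show ?case by simp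
    next
      case (step n) then show ?case using dec[of n] that(1) by simp
    qed
    have desc: "\<exists>k\<ge>k0. \<mu> k + n \<le> \<mu> k0" for n
    proof (induction n)
      case 0 then show ?case by auto
    next
      case (Suc n)
      then obtain k where k: "k \<ge> k0" "\<mu> k + n \<le> \<mu> k0" by blast
      obtain k' where k': "k' \<ge> max k k0" "progress (lb (f k')) (idx k') (\<tau> k') (\<tau> (Suc k'))" using H2 by blast
      have "\<mu> (Suc k') < \<mu> k'" using sdec k' by simp
      moreover have "\<mu> k' \<le> \<mu> k" using mono k k' by simp
      ultimately have "\<mu> (Suc k') + Suc n \<le> \<mu> k0" using k by simp
      then show ?case using k' by (intro exI[of _ "Suc k'"]) auto
    qed
    then show False using desc[of "Suc (\<mu> k0)"] by auto
  qed
qed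


section \<open>Soundness of GTPDL\<close>

lemma gprov_nf:
  assumes RW: "\<forall>a. R a \<subseteq> W \<times> W"
  shows "gprov S \<Longrightarrow> \<not> fls W R V S w"
proof (induction arbitrary: w rule: gprov.induct)
  case (1 r S Ps)
  from 1(1) show ?case
  proof cases
    case gcommon
    show ?thesis
    proof
      assume "fls W R V S w"
      from local_common[OF RW gcommon this] obtain i w' where "i < length Ps" "fls W R V (Ps ! i) w'" by blast
      then show False using 1(2) by (meson nth_mem)
    qed
  next
    case (StarR \<pi> \<phi> \<Gamma>)
    show ?thesis
    proof
      assume F: "fls W R V S w"
      let ?r = "rel W R V \<pi>"
      have prem: "\<not> fls W R V (finsert \<phi> \<Gamma>, {|Box \<pi> \<phi>|}) u" for u using 1(2) StarR by auto
      have wW: "w \<in> W" and ph: "sat W R V w \<phi>"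
        and nf: "\<not> sat W R V w (Box (Star \<pi>) \<phi>)" using F StarR by (auto simp: fls_def)
      have L: "\<forall>\<phi>'. \<phi>' |\<in>| fst S \<longrightarrow> sat W R V w \<phi>'" using F by (simp add: fls_def)
      have G: "sat W R V w (Box (Star \<pi>) \<gamma>)" if "\<gamma> |\<in>| \<Gamma>" for \<gamma>
      proof -
        have "Box (Star \<pi>) \<gamma> |\<in>| fst S" using that StarR by simp
        then show ?thesis using L by blast
      qed
      have reach: "sat W R V u \<phi>" if "(w, u) \<in> ?r\<^sup>*" for u
        using that
      proof (induction rule: rtrancl_induct)
        case base then show ?case using ph by simp
      next
        case (step y z)
        have yW: "y \<in> W" using step.hyps(1) wW rel_sub[OF RW, of V \<pi>]
          by (metis (no_types, lifting) mem_Sigma_iff rtranclE subsetD)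
        have "(w, y) \<in> rel W R V (Star \<pi>)" using step.hyps(1) wW by (auto dest: rtranclD)
        then have Gy: "\<And>\<gamma>. \<gamma> |\<in>| \<Gamma> \<Longrightarrow> sat W R V y \<gamma>" using G by auto
        have "sat W R V y (Box \<pi> \<phi>)" using prem[of y] yW Gy step.IH by (auto simp: fls_def)
        then show ?case using step.hyps(2) by auto
      qed
      from nf obtain v where "(w, v) \<in> Id_on W \<union> ?r\<^sup>+" "\<not> sat W R V v \<phi>" by auto
      then show False using reach ph by (auto dest: trancl_into_rtrancl)
    qed
  qed
qed

theorem gprov_sound: "gprov S \<Longrightarrow> valid TYPE('w) S"
  unfolding valid_def
proof (intro allI impI ballI)
  fix W :: "'w set" and R V w
  assume "gprov S" "W \<noteq> {} \<and> (\<forall>a. R a \<subseteq> W \<times> W)" "w \<in> W" "\<forall>\<phi>. \<phi> |\<in>| fst S \<longrightarrow> sat W R V w \<phi>"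
  then show "\<exists>\<psi>. \<psi> |\<in>| snd S \<and> sat W R V w \<psi>" using gprov_nf[of R W S V w] by (auto simp: fls_def)
qed

section \<open>Derived rules\<close>

definition Neg :: "('p,'a) fm \<Rightarrow> ('p,'a) fm" where "Neg a = Imp a Bot"
definition Top :: "('p,'a) fm" where "Top = Imp Bot Bot"
definition And :: "('p,'a) fm \<Rightarrow> ('p,'a) fm \<Rightarrow> ('p,'a) fm" where "And a b = Neg (Imp a (Neg b))"
definition Or :: "('p,'a) fm \<Rightarrow> ('p,'a) fm \<Rightarrow> ('p,'a) fm" where "Or a b = Imp (Neg a) b"
definition conjL :: "('p,'a) fm list \<Rightarrow> ('p,'a) fm" where "conjL xs = foldr And xs Top"
definition disjL :: "('p,'a) fm list \<Rightarrow> ('p,'a) fm" where "disjL xs = foldr Or xs Bot"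
definition lst :: "'x fset \<Rightarrow> 'x list" where "lst X = (SOME xs. fset_of_list xs = X)"
lemma lst: "fset_of_list (lst X) = X" unfolding lst_def by (rule someI_ex) (rule exists_fset_of_list)
lemma lst_set: "x \<in> set (lst X) \<longleftrightarrow> x |\<in>| X" using lst[of X] by (metis fset_of_list_elem)
definition conjF where "conjF X = conjL (lst X)"
definition disjF where "disjF X = disjL (lst X)"

locale prov =
  fixes P :: "('p,'a) seq \<Rightarrow> bool"
  assumes cc: "\<And>r S Ps. common r S Ps \<Longrightarrow> (\<And>Q. Q \<in> set Ps \<Longrightarrow> P Q) \<Longrightarrow> P S"
    and st0: "\<And>\<chi> \<pi>. P ({|\<chi>|}, {|Box \<pi> \<chi>|}) \<Longrightarrow> P ({|\<chi>|}, {|Box (Star \<pi>) \<chi>|})"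
begin

lemma ax: "\<phi> |\<in>| \<Gamma> \<Longrightarrow> \<phi> |\<in>| \<Delta> \<Longrightarrow> P (\<Gamma>, \<Delta>)"
  by (rule cc[OF common.Ax]) auto

lemma botL: "Bot |\<in>| \<Gamma> \<Longrightarrow> P (\<Gamma>, \<Delta>)"
proof -
  assume "Bot |\<in>| \<Gamma>"
  then have "finsert Bot \<Gamma> = \<Gamma>" by auto
  moreover have "P (finsert Bot \<Gamma>, \<Delta>)" by (rule cc[OF common.BotL]) simp
  ultimately show ?thesis by simp
qed

lemma wk: "P (\<Gamma>, \<Delta>) \<Longrightarrow> \<Gamma> |\<subseteq>| \<Gamma>' \<Longrightarrow> \<Delta> |\<subseteq>| \<Delta>' \<Longrightarrow> P (\<Gamma>', \<Delta>')"
  by (rule cc[OF common.Wk]) auto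

lemma cut: "P (\<Gamma>, finsert \<phi> \<Delta>) \<Longrightarrow> P (finsert \<phi> \<Gamma>, \<Delta>) \<Longrightarrow> P (\<Gamma>, \<Delta>)"
  by (rule cc[OF common.Cut]) auto

lemma impL: "P (\<Gamma>, finsert \<phi> \<Delta>) \<Longrightarrow> P (finsert \<psi> \<Gamma>, \<Delta>) \<Longrightarrow> P (finsert (Imp \<phi> \<psi>) \<Gamma>, \<Delta>)"
  by (rule cc[OF common.ImpL]) auto

lemma impL': "Imp \<phi> \<psi> |\<in>| \<Gamma> \<Longrightarrow> P (\<Gamma>, finsert \<phi> \<Delta>) \<Longrightarrow> P (finsert \<psi> \<Gamma>, \<Delta>) \<Longrightarrow> P (\<Gamma>, \<Delta>)"
  using impL[of \<Gamma> \<phi> \<Delta> \<psi>] by (simp add: finsert_absorb)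

lemma impR: "P (finsert \<phi> \<Gamma>, finsert \<psi> \<Delta>) \<Longrightarrow> P (\<Gamma>, finsert (Imp \<phi> \<psi>) \<Delta>)"
  by (rule cc[OF common.ImpR]) auto

lemma box: "P (\<Gamma>, finsert \<phi> (BoxC \<pi> |`| \<Delta>)) \<Longrightarrow> P (Box \<pi> |`| \<Gamma>, finsert (Box \<pi> \<phi>) \<Delta>)"
  by (rule cc[OF common.BoxR]) auto

lemma boxC: "P (\<Gamma>, finsert \<phi> (Box \<pi> |`| \<Delta>)) \<Longrightarrow> P (BoxC \<pi> |`| \<Gamma>, finsert (BoxC \<pi> \<phi>) \<Delta>)"
  by (rule cc[OF common.BoxCR]) auto

lemma sqL': "Box (Sq a b) \<phi> |\<in>| \<Gamma> \<Longrightarrow> P (finsert (Box a (Box b \<phi>)) \<Gamma>, \<Delta>) \<Longrightarrow> P (\<Gamma>, \<Delta>)"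
  using cc[OF common.SqL[of a b \<phi> \<Gamma> \<Delta>]] by (simp add: finsert_absorb)

lemma sqR: "P (\<Gamma>, finsert (Box a (Box b \<phi>)) \<Delta>) \<Longrightarrow> P (\<Gamma>, finsert (Box (Sq a b) \<phi>) \<Delta>)"
  by (rule cc[OF common.SqR]) auto

lemma chL': "Box (Ch a b) \<phi> |\<in>| \<Gamma> \<Longrightarrow> P (finsert (Box a \<phi>) (finsert (Box b \<phi>) \<Gamma>), \<Delta>) \<Longrightarrow> P (\<Gamma>, \<Delta>)"
  using cc[OF common.ChL[of a b \<phi> \<Gamma> \<Delta>]] by (simp add: finsert_absorb)

lemma chR: "P (\<Gamma>, finsert (Box a \<phi>) \<Delta>) \<Longrightarrow> P (\<Gamma>, finsert (Box b \<phi>) \<Delta>) \<Longrightarrow> P (\<Gamma>, finsert (Box (Ch a b) \<phi>) \<Delta>)"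
  by (rule cc[OF common.ChR]) auto

lemma starL': "Box (Star a) \<phi> |\<in>| \<Gamma> \<Longrightarrow> P (finsert \<phi> (finsert (Box a (Box (Star a) \<phi>)) \<Gamma>), \<Delta>) \<Longrightarrow> P (\<Gamma>, \<Delta>)"
  using cc[OF common.StarL[of a \<phi> \<Gamma> \<Delta>]] by (simp add: finsert_absorb)

lemma testL': "Box (Test \<psi>) \<phi> |\<in>| \<Gamma> \<Longrightarrow> P (\<Gamma>, finsert \<psi> \<Delta>) \<Longrightarrow> P (finsert \<phi> \<Gamma>, \<Delta>) \<Longrightarrow> P (\<Gamma>, \<Delta>)"
proof -
  assume m: "Box (Test \<psi>) \<phi> |\<in>| \<Gamma>" and p: "P (\<Gamma>, finsert \<psi> \<Delta>)" "P (finsert \<phi> \<Gamma>, \<Delta>)"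
  have "P (finsert (Box (Test \<psi>) \<phi>) \<Gamma>, \<Delta>)" by (rule cc[OF common.TestL]) (use p in auto)
  then show ?thesis using m by (simp add: finsert_absorb)
qed

lemma testR: "P (finsert \<psi> \<Gamma>, finsert \<phi> \<Delta>) \<Longrightarrow> P (\<Gamma>, finsert (Box (Test \<psi>) \<phi>) \<Delta>)"
  by (rule cc[OF common.TestR]) auto

lemma negL: "P (\<Gamma>, finsert a \<Delta>) \<Longrightarrow> P (finsert (Neg a) \<Gamma>, \<Delta>)"
  unfolding Neg_def by (rule impL) (auto intro: botL)

lemma negR: "P (finsert a \<Gamma>, \<Delta>) \<Longrightarrow> P (\<Gamma>, finsert (Neg a) \<Delta>)"
  unfolding Neg_def by (rule impR) (erule wk, auto)

lemma negL': "Neg a |\<in>| \<Gamma> \<Longrightarrow> P (\<Gamma>, finsert a \<Delta>) \<Longrightarrow> P (\<Gamma>, \<Delta>)"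
  using negL[of \<Gamma> a \<Delta>] by (simp add: finsert_absorb)

lemma andL: "P (finsert a (finsert b \<Gamma>), \<Delta>) \<Longrightarrow> P (finsert (And a b) \<Gamma>, \<Delta>)"
  unfolding And_def by (intro negL impR negR) (erule wk, auto)

lemma andR: "P (\<Gamma>, finsert a \<Delta>) \<Longrightarrow> P (\<Gamma>, finsert b \<Delta>) \<Longrightarrow> P (\<Gamma>, finsert (And a b) \<Delta>)"
  unfolding And_def by (intro negR impL negL) auto

lemma orL: "P (finsert a \<Gamma>, \<Delta>) \<Longrightarrow> P (finsert b \<Gamma>, \<Delta>) \<Longrightarrow> P (finsert (Or a b) \<Gamma>, \<Delta>)"
  unfolding Or_def by (intro impL negR) auto

lemma orR: "P (\<Gamma>, finsert a (finsert b \<Delta>)) \<Longrightarrow> P (\<Gamma>, finsert (Or a b) \<Delta>)"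
  unfolding Or_def by (intro impR negL) auto

lemma topR: "P (\<Gamma>, finsert Top \<Delta>)"
  unfolding Top_def by (intro impR botL) auto

lemma conjLeft: "P (fset_of_list xs |\<union>| \<Gamma>, \<Delta>) \<Longrightarrow> P (finsert (conjL xs) \<Gamma>, \<Delta>)"
proof (induction xs arbitrary: \<Gamma>)
  case Nil then show ?case by (auto simp: conjL_def elim: wk)
next
  case (Cons x xs)
  have "P (finsert (conjL xs) (finsert x \<Gamma>), \<Delta>)" using Cons.prems by (intro Cons.IH) (auto elim: wk)
  then have "P (finsert x (finsert (conjL xs) \<Gamma>), \<Delta>)" by (auto elim: wk)
  then show ?case unfolding conjL_def by simp (rule andL, simp add: conjL_def)
qed

lemma conjRight: "(\<And>x. x \<in> set xs \<Longrightarrow> P (\<Gamma>, finsert x \<Delta>)) \<Longrightarrow> P (\<Gamma>, finsert (conjL xs) \<Delta>)"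
proof (induction xs)
  case Nil then show ?case by (simp add: conjL_def topR)
next
  case (Cons x xs)
  then show ?case unfolding conjL_def by simp (rule andR, auto simp: conjL_def)
qed

lemma disjRight: "P (\<Gamma>, fset_of_list xs |\<union>| \<Delta>) \<Longrightarrow> P (\<Gamma>, finsert (disjL xs) \<Delta>)"
proof (induction xs arbitrary: \<Delta>)
  case Nil then show ?case by (auto simp: disjL_def elim: wk)
next
  case (Cons x xs)
  have "P (\<Gamma>, finsert (disjL xs) (finsert x \<Delta>))" using Cons.prems by (intro Cons.IH) (auto elim: wk)
  then have "P (\<Gamma>, finsert x (finsert (disjL xs) \<Delta>))" by (auto elim: wk)
  then show ?case unfolding disjL_def by simp (rule orR, simp add: disjL_def)
qed

lemma disjLeft: "(\<And>x. x \<in> set xs \<Longrightarrow> P (finsert x \<Gamma>, \<Delta>)) \<Longrightarrow> P (finsert (disjL xs) \<Gamma>, \<Delta>)"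
proof (induction xs)
  case Nil then show ?case by (simp add: disjL_def botL)
next
  case (Cons x xs)
  then show ?case unfolding disjL_def by simp (rule orL, auto simp: disjL_def)
qed

lemma conjFL: "P (X |\<union>| \<Gamma>, \<Delta>) \<Longrightarrow> P (finsert (conjF X) \<Gamma>, \<Delta>)"
  unfolding conjF_def by (rule conjLeft) (simp add: lst)

lemma conjFR: "(\<And>x. x |\<in>| X \<Longrightarrow> P (\<Gamma>, finsert x \<Delta>)) \<Longrightarrow> P (\<Gamma>, finsert (conjF X) \<Delta>)"
  unfolding conjF_def by (rule conjRight) (simp add: lst_set)

lemma disjFR: "P (\<Gamma>, X |\<union>| \<Delta>) \<Longrightarrow> P (\<Gamma>, finsert (disjF X) \<Delta>)"
  unfolding disjF_def by (rule disjRight) (simp add: lst)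

lemma disjFL: "(\<And>x. x |\<in>| X \<Longrightarrow> P (finsert x \<Gamma>, \<Delta>)) \<Longrightarrow> P (finsert (disjF X) \<Gamma>, \<Delta>)"
  unfolding disjF_def by (rule disjLeft) (simp add: lst_set)

lemma multicut: "(\<And>\<sigma>. \<sigma> |\<in>| \<Sigma> \<Longrightarrow> P (\<Gamma>, finsert \<sigma> \<Delta>)) \<Longrightarrow> P (\<Sigma> |\<union>| \<Gamma>, \<Delta>) \<Longrightarrow> P (\<Gamma>, \<Delta>)"
proof (induction \<Sigma> arbitrary: \<Gamma> rule: fset_induct)
  case empty then show ?case by simp
next
  case (insert x S)
  have "P (finsert x \<Gamma>, \<Delta>)"
  proof (rule insert.IH)
    show "P (finsert x \<Gamma>, finsert \<sigma> \<Delta>)" if "\<sigma> |\<in>| S" for \<sigma> using insert.prems(1)[of \<sigma>] that by (auto elim: wk)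
    show "P (S |\<union>| finsert x \<Gamma>, \<Delta>)" using insert.prems(2) by (auto elim: wk)
  qed
  then show ?case using insert.prems(1)[of x] by (auto intro: cut)
qed

lemma negs: "P (\<Gamma>, X |\<union>| \<Delta>) \<Longrightarrow> P (Neg |`| X |\<union>| \<Gamma>, \<Delta>)"
proof (induction X arbitrary: \<Delta> rule: fset_induct)
  case empty then show ?case by simp
next
  case (insert x X)
  have "P (Neg |`| X |\<union>| \<Gamma>, finsert x \<Delta>)" using insert.prems by (intro insert.IH) (auto elim: wk)
  then have "P (finsert (Neg x) (Neg |`| X |\<union>| \<Gamma>), \<Delta>)" by (rule negL)
  then show ?case by (auto elim: wk)
qed

lemma split: "(\<And>A. A |\<subseteq>| X \<Longrightarrow> P (A |\<union>| \<Gamma>, (X |-| A) |\<union>| \<Delta>)) \<Longrightarrow> P (\<Gamma>, \<Delta>)"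
proof (induction X arbitrary: \<Gamma> \<Delta> rule: fset_induct_stronger)
  case empty
  then show ?case using empty[of "{||}"] by simp
next
  case (insert x X)
  have 1: "P (\<Gamma>, finsert x \<Delta>)"
  proof (rule insert.IH)
    fix A assume A: "A |\<subseteq>| X"
    then have "P (A |\<union>| \<Gamma>, (finsert x X |-| A) |\<union>| \<Delta>)" using insert.prems by auto
    moreover have "(finsert x X |-| A) |\<union>| \<Delta> |\<subseteq>| (X |-| A) |\<union>| finsert x \<Delta>" by auto
    ultimately show "P (A |\<union>| \<Gamma>, (X |-| A) |\<union>| finsert x \<Delta>)" by (auto elim: wk)
  qed
  have 2: "P (finsert x \<Gamma>, \<Delta>)"
  proof (rule insert.IH)
    fix A assume A: "A |\<subseteq>| X"
    then have "finsert x A |\<subseteq>| finsert x X" by auto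
    then have "P (finsert x A |\<union>| \<Gamma>, (finsert x X |-| finsert x A) |\<union>| \<Delta>)" by (rule insert.prems)
    moreover have "(finsert x X |-| finsert x A) |\<union>| \<Delta> |\<subseteq>| (X |-| A) |\<union>| \<Delta>" by auto
    ultimately show "P (A |\<union>| finsert x \<Gamma>, (X |-| A) |\<union>| \<Delta>)" by (auto elim: wk)
  qed
  from 1 2 show ?case by (rule cut)
qed

end


fun clF :: "('p,'a) fm \<Rightarrow> ('p,'a) fm set" and clP :: "('p,'a) pg \<Rightarrow> ('p,'a) fm \<Rightarrow> ('p,'a) fm set" where
  "clF Bot = {Bot}"
| "clF (Var p) = {Var p}"
| "clF (Imp a b) = insert (Imp a b) (clF a \<union> clF b)"
| "clF (Box \<pi> \<phi>) = clP \<pi> \<phi> \<union> clF \<phi>"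
| "clF (BoxC \<pi> \<phi>) = {BoxC \<pi> \<phi>, Imp (BoxC \<pi> \<phi>) Bot, Bot} \<union> clF \<phi> \<union> clP \<pi> (Imp (BoxC \<pi> \<phi>) Bot)"
| "clP (At a) \<phi> = {Box (At a) \<phi>}"
| "clP (Sq a b) \<phi> = insert (Box (Sq a b) \<phi>) (clP a (Box b \<phi>) \<union> clP b \<phi>)"
| "clP (Ch a b) \<phi> = insert (Box (Ch a b) \<phi>) (clP a \<phi> \<union> clP b \<phi>)"
| "clP (Star a) \<phi> = insert (Box (Star a) \<phi>) (clP a (Box (Star a) \<phi>))"
| "clP (Test \<psi>) \<phi> = insert (Box (Test \<psi>) \<phi>) (clF \<psi>)"

lemma clP_self: "Box \<pi> \<phi> \<in> clP \<pi> \<phi>"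
  by (cases \<pi>) auto

lemma clF_self: "\<theta> \<in> clF \<theta>"
  by (cases \<theta>) (auto simp: clP_self)

lemma cl_finite: "finite (clF \<theta>)"
  by (induction \<theta> rule: fm.induct[where ?P2.0="\<lambda>\<pi>. \<forall>\<phi>. finite (clP \<pi> \<phi>)"]) auto

lemma cl_closed0: "\<forall>y\<in>clF \<theta>. clF y \<subseteq> clF \<theta>"
proof (induction \<theta> rule: fm.induct[where ?P2.0="\<lambda>\<pi>. \<forall>\<phi>. \<forall>y\<in>clP \<pi> \<phi>. clF y \<subseteq> clP \<pi> \<phi> \<union> clF \<phi>"])
  case (BoxC \<pi> \<phi>)
  have IH: "\<forall>\<phi>. \<forall>y\<in>clP \<pi> \<phi>. clF y \<subseteq> clP \<pi> \<phi> \<union> clF \<phi>" "\<forall>y\<in>clF \<phi>. clF y \<subseteq> clF \<phi>" using BoxC by blast+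
  let ?n = "Imp (BoxC \<pi> \<phi>) Bot"
  have e: "clF (BoxC \<pi> \<phi>) = {BoxC \<pi> \<phi>, ?n, Bot} \<union> clF \<phi> \<union> clP \<pi> ?n" by simp
  have n: "clF ?n = insert ?n (clF (BoxC \<pi> \<phi>) \<union> {Bot})" by (simp only: clF.simps)
  show ?case
  proof
    fix y assume y: "y \<in> clF (BoxC \<pi> \<phi>)"
    have "y = BoxC \<pi> \<phi> \<or> y = ?n \<or> y = Bot \<or> y \<in> clF \<phi> \<or> y \<in> clP \<pi> ?n" using y e by blast
    then show "clF y \<subseteq> clF (BoxC \<pi> \<phi>)"
    proof (elim disjE)
      assume "y = ?n" then show ?thesis using n e by auto
    next
      assume "y \<in> clP \<pi> ?n"
      then have "clF y \<subseteq> clP \<pi> ?n \<union> clF ?n" using IH(1) by blast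
      then show ?thesis using n e by auto
    next
      assume "y \<in> clF \<phi>" then show ?thesis using IH(2) e by blast
    qed (use e in auto)
  qed
next
  case (Sq x1 x2)
  show ?case
  proof (intro allI ballI)
    fix \<phi> y assume y: "y \<in> clP (Sq x1 x2) \<phi>"
    have A: "y \<in> clP x1 (Box x2 \<phi>) \<Longrightarrow> clF y \<subseteq> clP x1 (Box x2 \<phi>) \<union> clF (Box x2 \<phi>)" using Sq(1) by blast
    have B: "y \<in> clP x2 \<phi> \<Longrightarrow> clF y \<subseteq> clP x2 \<phi> \<union> clF \<phi>" using Sq(2) by blast
    show "clF y \<subseteq> clP (Sq x1 x2) \<phi> \<union> clF \<phi>" using y A B by auto
  qed
next
  case (Ch x1 x2)
  show ?case
  proof (intro allI ballI)
    fix \<phi> y assume y: "y \<in> clP (Ch x1 x2) \<phi>"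
    have A: "y \<in> clP x1 \<phi> \<Longrightarrow> clF y \<subseteq> clP x1 \<phi> \<union> clF \<phi>" using Ch(1) by blast
    have B: "y \<in> clP x2 \<phi> \<Longrightarrow> clF y \<subseteq> clP x2 \<phi> \<union> clF \<phi>" using Ch(2) by blast
    show "clF y \<subseteq> clP (Ch x1 x2) \<phi> \<union> clF \<phi>" using y A B by auto
  qed
next
  case (Star x)
  show ?case
  proof (intro allI ballI)
    fix \<phi> y assume y: "y \<in> clP (Star x) \<phi>"
    have A: "y \<in> clP x (Box (Star x) \<phi>) \<Longrightarrow> clF y \<subseteq> clP x (Box (Star x) \<phi>) \<union> clF (Box (Star x) \<phi>)" using Star(1) by blast
    show "clF y \<subseteq> clP (Star x) \<phi> \<union> clF \<phi>" using y A by auto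
  qed
qed auto

lemma cl_closed: "y \<in> clF \<theta> \<Longrightarrow> clF y \<subseteq> clF \<theta>" using cl_closed0 by blast


locale compl = prov P for P :: "('p,'a) seq \<Rightarrow> bool" +
  fixes C :: "('p,'a) fm fset"
  assumes Ccl: "\<And>y. y |\<in>| C \<Longrightarrow> clF y \<subseteq> fset C"
begin

lemma C_sub: "y |\<in>| C \<Longrightarrow> x \<in> clF y \<Longrightarrow> x |\<in>| C"
  using Ccl by blast

lemma C_Imp: "Imp a b |\<in>| C \<Longrightarrow> a |\<in>| C \<and> b |\<in>| C"
  using C_sub[of "Imp a b" a] C_sub[of "Imp a b" b] clF_self[of a] clF_self[of b] by auto

lemma C_Box: "Box \<pi> \<phi> |\<in>| C \<Longrightarrow> \<phi> |\<in>| C"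
  using C_sub[of "Box \<pi> \<phi>" \<phi>] clF_self[of \<phi>] by auto

lemma C_BoxC: "BoxC \<pi> \<phi> |\<in>| C \<Longrightarrow> \<phi> |\<in>| C \<and> Bot |\<in>| C \<and> Box \<pi> (Neg (BoxC \<pi> \<phi>)) |\<in>| C \<and> Neg (BoxC \<pi> \<phi>) |\<in>| C"
  using C_sub[of "BoxC \<pi> \<phi>"] clF_self[of \<phi>] clP_self[of \<pi> "Neg (BoxC \<pi> \<phi>)"]
  by (auto simp: Neg_def)

lemma C_Sq: "Box (Sq a b) \<phi> |\<in>| C \<Longrightarrow> Box a (Box b \<phi>) |\<in>| C \<and> Box b \<phi> |\<in>| C"
  using C_sub[of "Box (Sq a b) \<phi>"] clP_self[of a "Box b \<phi>"] clP_self[of b \<phi>] by auto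

lemma C_Ch: "Box (Ch a b) \<phi> |\<in>| C \<Longrightarrow> Box a \<phi> |\<in>| C \<and> Box b \<phi> |\<in>| C"
  using C_sub[of "Box (Ch a b) \<phi>"] clP_self[of a \<phi>] clP_self[of b \<phi>] by auto

lemma C_Star: "Box (Star a) \<phi> |\<in>| C \<Longrightarrow> Box a (Box (Star a) \<phi>) |\<in>| C"
  using C_sub[of "Box (Star a) \<phi>"] clP_self[of a "Box (Star a) \<phi>"] by auto

lemma C_Test: "Box (Test \<psi>) \<phi> |\<in>| C \<Longrightarrow> \<psi> |\<in>| C"
  using C_sub[of "Box (Test \<psi>) \<phi>"] clF_self[of \<psi>] by auto

definition at where "at A \<longleftrightarrow> A |\<subseteq>| C \<and> \<not> P (A, C |-| A)"
definition rho where "rho A = conjF (A |\<union>| Neg |`| (C |-| A))"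
definition Con where "Con \<pi> A B \<longleftrightarrow> \<not> P (A, finsert (Box \<pi> (Neg (rho B))) (C |-| A))"
definition Atoms where "Atoms = ffilter at (fPow C)"

lemma Atoms_iff: "A |\<in>| Atoms \<longleftrightarrow> at A"
  unfolding Atoms_def at_def by auto

lemma rhoL: "A |\<subseteq>| C \<Longrightarrow> P (A |\<union>| \<Gamma>, (C |-| A) |\<union>| \<Delta>) \<Longrightarrow> P (finsert (rho A) \<Gamma>, \<Delta>)"
proof -
  assume h: "P (A |\<union>| \<Gamma>, (C |-| A) |\<union>| \<Delta>)"
  have "P (Neg |`| (C |-| A) |\<union>| (A |\<union>| \<Gamma>), \<Delta>)" by (rule negs) (rule h)
  then have "P ((A |\<union>| Neg |`| (C |-| A)) |\<union>| \<Gamma>, \<Delta>)" by (auto elim: wk)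
  then show ?thesis unfolding rho_def by (rule conjFL)
qed

lemma rhoR: "A |\<subseteq>| \<Gamma> \<Longrightarrow> C |-| A |\<subseteq>| \<Delta> \<Longrightarrow> P (\<Gamma>, finsert (rho A) \<Delta>)"
  unfolding rho_def
proof (rule conjFR)
  fix x assume A: "A |\<subseteq>| \<Gamma>" and D: "C |-| A |\<subseteq>| \<Delta>" and x: "x |\<in>| A |\<union>| Neg |`| (C |-| A)"
  show "P (\<Gamma>, finsert x \<Delta>)"
  proof (cases "x |\<in>| A")
    case True then show ?thesis using A by (intro ax[of x]) auto
  next
    case False
    then obtain e where e: "x = Neg e" "e |\<in>| C |-| A" using x by auto
    have "P (finsert e \<Gamma>, \<Delta>)" using e D by (intro ax[of e]) auto
    then show ?thesis using e by (simp add: negR)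
  qed
qed

lemma at_contra: "at A \<Longrightarrow> P (\<Gamma>, \<Delta>) \<Longrightarrow> \<Gamma> |\<subseteq>| A \<Longrightarrow> \<Delta> |\<subseteq>| C |-| A \<Longrightarrow> False"
  unfolding at_def by (meson wk)

lemma at_mem: "at A \<Longrightarrow> x |\<in>| C \<Longrightarrow> x |\<notin>| A \<Longrightarrow> P (\<Gamma>, finsert x \<Delta>) \<Longrightarrow> \<Gamma> |\<subseteq>| A \<Longrightarrow> \<Delta> |\<subseteq>| C |-| A \<Longrightarrow> False"
  using at_contra[of A \<Gamma> "finsert x \<Delta>"] by auto

lemma atomsplit: "(\<And>A. at A \<Longrightarrow> P (A |\<union>| \<Gamma>, (C |-| A) |\<union>| \<Delta>)) \<Longrightarrow> P (\<Gamma>, \<Delta>)"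
proof (rule split[of C])
  fix A assume h: "\<And>A. at A \<Longrightarrow> P (A |\<union>| \<Gamma>, (C |-| A) |\<union>| \<Delta>)" and A: "A |\<subseteq>| C"
  show "P (A |\<union>| \<Gamma>, (C |-| A) |\<union>| \<Delta>)"
  proof (cases "at A")
    case True then show ?thesis by (rule h)
  next
    case False
    then have "P (A, C |-| A)" using A unfolding at_def by blast
    then show ?thesis by (auto elim: wk)
  qed
qed

lemma lindenbaum:
  assumes "\<Gamma> |\<subseteq>| C" "\<Delta> |\<subseteq>| C" "\<not> P (\<Gamma>, \<Delta>)"
  shows "\<exists>A. at A \<and> \<Gamma> |\<subseteq>| A \<and> \<Delta> |\<subseteq>| C |-| A"
proof (rule ccontr)
  assume n: "\<not> ?thesis"
  have "P (\<Gamma>, \<Delta>)"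
  proof (rule atomsplit)
    fix A assume A: "at A"
    show "P (A |\<union>| \<Gamma>, (C |-| A) |\<union>| \<Delta>)"
    proof (cases "\<Gamma> |\<subseteq>| A \<and> \<Delta> |\<subseteq>| C |-| A")
      case True then show ?thesis using n A by blast
    next
      case False
      then obtain x where "(x |\<in>| \<Gamma> \<and> x |\<notin>| A) \<or> (x |\<in>| \<Delta> \<and> x |\<in>| A)" using assms(2) by blast
      then show ?thesis using assms(1,2) by (elim disjE) (rule ax[of x]; auto)+
    qed
  qed
  then show False using assms(3) by blast
qed

lemma at_distinct: "at A \<Longrightarrow> at B \<Longrightarrow> A \<noteq> B \<Longrightarrow> A |\<subseteq>| \<Gamma> \<Longrightarrow> B |\<subseteq>| \<Gamma> \<Longrightarrow> C |-| A |\<subseteq>| \<Delta> \<Longrightarrow> C |-| B |\<subseteq>| \<Delta> \<Longrightarrow> P (\<Gamma>, \<Delta>)"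
proof -
  assume a: "at A" "at B" "A \<noteq> B" "A |\<subseteq>| \<Gamma>" "B |\<subseteq>| \<Gamma>" "C |-| A |\<subseteq>| \<Delta>" "C |-| B |\<subseteq>| \<Delta>"
  then have s: "A |\<subseteq>| C" "B |\<subseteq>| C" unfolding at_def by auto
  from a(3) obtain x where "(x |\<in>| A \<and> x |\<notin>| B) \<or> (x |\<in>| B \<and> x |\<notin>| A)" by blast
  then show ?thesis using a s by (elim disjE) (rule ax[of x]; auto)+
qed

lemma at_Bot: "at A \<Longrightarrow> Bot |\<notin>| A"
  using at_contra botL[of A "C |-| A"] by blast

lemma at_Imp: assumes A: "at A" and c: "Imp a b |\<in>| C"
  shows "Imp a b |\<in>| A \<longleftrightarrow> (a |\<in>| A \<longrightarrow> b |\<in>| A)"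
proof
  assume i: "Imp a b |\<in>| A"
  show "a |\<in>| A \<longrightarrow> b |\<in>| A"
  proof
    assume a: "a |\<in>| A"
    show "b |\<in>| A"
    proof (rule ccontr)
      assume b: "b |\<notin>| A"
      have "P (A, C |-| A)"
        by (rule impL'[OF i]) (use a b C_Imp[OF c] in \<open>auto intro: ax\<close>)
      then show False using A at_contra by blast
    qed
  qed
next
  assume h: "a |\<in>| A \<longrightarrow> b |\<in>| A"
  show "Imp a b |\<in>| A"
  proof (rule ccontr)
    assume n: "Imp a b |\<notin>| A"
    have "P (finsert a A, finsert b (C |-| A))"
      using h C_Imp[OF c] by (cases "a |\<in>| A") (auto intro: ax)
    then have "P (A, finsert (Imp a b) (C |-| A))" by (rule impR)
    then show False using at_mem[OF A c n] by blast
  qed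
qed

lemma at_Sq: assumes A: "at A" and c: "Box (Sq a b) \<phi> |\<in>| C" and i: "Box (Sq a b) \<phi> |\<in>| A"
  shows "Box a (Box b \<phi>) |\<in>| A"
proof (rule ccontr)
  assume n: "Box a (Box b \<phi>) |\<notin>| A"
  have "P (A, C |-| A)" by (rule sqL'[OF i]) (use n C_Sq[OF c] in \<open>auto intro: ax\<close>)
  then show False using A at_contra by blast
qed

lemma at_Ch: assumes A: "at A" and c: "Box (Ch a b) \<phi> |\<in>| C" and i: "Box (Ch a b) \<phi> |\<in>| A"
  shows "Box a \<phi> |\<in>| A \<and> Box b \<phi> |\<in>| A"
proof (rule ccontr)
  assume n: "\<not> ?thesis"
  have "P (A, C |-| A)" by (rule chL'[OF i]) (use n C_Ch[OF c] in \<open>auto intro: ax\<close>)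
  then show False using A at_contra by blast
qed

lemma at_Star: assumes A: "at A" and c: "Box (Star a) \<phi> |\<in>| C" and i: "Box (Star a) \<phi> |\<in>| A"
  shows "\<phi> |\<in>| A \<and> Box a (Box (Star a) \<phi>) |\<in>| A"
proof (rule ccontr)
  assume n: "\<not> ?thesis"
  have "P (A, C |-| A)" by (rule starL'[OF i]) (use n C_Star[OF c] C_Box[OF c] in \<open>auto intro: ax\<close>)
  then show False using A at_contra by blast
qed

lemma at_Test: assumes A: "at A" and c: "Box (Test \<psi>) \<phi> |\<in>| C" and i: "Box (Test \<psi>) \<phi> |\<in>| A"
  and p: "\<psi> |\<in>| A" shows "\<phi> |\<in>| A"
proof (rule ccontr)
  assume n: "\<not> ?thesis"
  have "P (A, C |-| A)" by (rule testL'[OF i]) (use n p C_Box[OF c] in \<open>auto intro: ax\<close>)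
  then show False using A at_contra by blast
qed

end


lemma star_step2: "(w, v1) \<in> Id_on W \<union> r\<^sup>+ \<Longrightarrow> (v1, v) \<in> r \<Longrightarrow> (w, v) \<in> Id_on W \<union> r\<^sup>+"
proof -
  assume a: "(w, v1) \<in> Id_on W \<union> r\<^sup>+" "(v1, v) \<in> r"
  from a(1) have "(w, v1) \<in> r\<^sup>*" by (auto dest: trancl_into_rtrancl)
  then have "(w, v) \<in> r\<^sup>+" using rtrancl_into_trancl1[OF _ a(2)] by blast
  then show ?thesis by blast
qed

context compl
begin

definition W0 where "W0 = {A. at A}"
definition MR where "MR a = {(A,B). at A \<and> at B \<and> Con (At a) A B}"
definition MV where "MV A = {p. Var p |\<in>| A}"

abbreviation msat where "msat \<equiv> sat W0 MR MV"
abbreviation mrel where "mrel \<equiv> rel W0 MR MV"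

lemma MRW: "\<forall>a. MR a \<subseteq> W0 \<times> W0"
  unfolding MR_def W0_def by auto

lemma mrel_at: "(A,B) \<in> mrel \<pi> \<Longrightarrow> at A \<and> at B"
  using rel_sub[OF MRW, of MV \<pi>] unfolding W0_def by blast

lemma negsplit:
  assumes "\<And>E. at E \<Longrightarrow> E |\<notin>| Z \<Longrightarrow> P (E, finsert \<phi> (C |-| E))"
  shows "P (Neg |`| rho |`| Z, {|\<phi>|})"
proof (rule atomsplit)
  fix E assume E: "at E"
  show "P (E |\<union>| Neg |`| rho |`| Z, (C |-| E) |\<union>| {|\<phi>|})"
  proof (cases "E |\<in>| Z")
    case True
    then have m: "Neg (rho E) |\<in>| E |\<union>| Neg |`| rho |`| Z" by auto
    show ?thesis by (rule negL'[OF m]) (rule rhoR, auto)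
  next
    case False
    then show ?thesis using assms[OF E] by (auto elim: wk)
  qed
qed

lemma boxlift:
  assumes h1: "\<And>B. B |\<in>| Z \<Longrightarrow> P (A, finsert (Box \<pi> (Neg (rho B))) (C |-| A))"
    and h2: "P (Neg |`| rho |`| Z, {|\<phi>|})"
  shows "P (A, finsert (Box \<pi> \<phi>) (C |-| A))"
proof (rule multicut[of "Box \<pi> |`| Neg |`| rho |`| Z"])
  fix \<sigma> assume "\<sigma> |\<in>| Box \<pi> |`| Neg |`| rho |`| Z"
  then obtain B where B: "B |\<in>| Z" "\<sigma> = Box \<pi> (Neg (rho B))" by auto
  from h1[OF B(1)] show "P (A, finsert \<sigma> (finsert (Box \<pi> \<phi>) (C |-| A)))" by (rule wk) (use B in auto)
next
  have "P (Box \<pi> |`| (Neg |`| rho |`| Z), finsert (Box \<pi> \<phi>) {||})" by (rule box) (use h2 in simp)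
  then show "P (Box \<pi> |`| Neg |`| rho |`| Z |\<union>| A, finsert (Box \<pi> \<phi>) (C |-| A))" by (auto elim: wk)
qed

lemma boxClift:
  assumes h1: "\<And>B. B |\<in>| Z \<Longrightarrow> P (A, finsert (BoxC \<pi> (Neg (rho B))) (C |-| A))"
    and h2: "P (Neg |`| rho |`| Z, {|\<phi>|})"
  shows "P (A, finsert (BoxC \<pi> \<phi>) (C |-| A))"
proof (rule multicut[of "BoxC \<pi> |`| Neg |`| rho |`| Z"])
  fix \<sigma> assume "\<sigma> |\<in>| BoxC \<pi> |`| Neg |`| rho |`| Z"
  then obtain B where B: "B |\<in>| Z" "\<sigma> = BoxC \<pi> (Neg (rho B))" by auto
  from h1[OF B(1)] show "P (A, finsert \<sigma> (finsert (BoxC \<pi> \<phi>) (C |-| A)))" by (rule wk) (use B in auto)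
next
  have "P (BoxC \<pi> |`| (Neg |`| rho |`| Z), finsert (BoxC \<pi> \<phi>) {||})" by (rule boxC) (use h2 in simp)
  then show "P (BoxC \<pi> |`| Neg |`| rho |`| Z |\<union>| A, finsert (BoxC \<pi> \<phi>) (C |-| A))" by (auto elim: wk)
qed

lemma adj: "P ({|x|}, {|Box \<pi> (Neg y)|}) \<Longrightarrow> P ({|y|}, {|BoxC \<pi> (Neg x)|})"
proof -
  assume h: "P ({|x|}, {|Box \<pi> (Neg y)|})"
  have "P ({||}, finsert (Neg x) (Box \<pi> |`| {|Neg y|}))" by (rule negR) (use h in simp)
  then have "P (BoxC \<pi> |`| {||}, finsert (BoxC \<pi> (Neg x)) {|Neg y|})" by (rule boxC)
  then have 1: "P ({|y|}, finsert (Neg y) {|BoxC \<pi> (Neg x)|})" by (auto elim: wk)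
  have 2: "P (finsert (Neg y) {|y|}, {|BoxC \<pi> (Neg x)|})" by (rule negL) (rule ax[of y], auto)
  from 1 2 show ?thesis by (rule cut)
qed

definition "TL \<theta> \<longleftrightarrow> (\<forall>A. \<theta> |\<in>| C \<longrightarrow> at A \<longrightarrow> (msat A \<theta> \<longleftrightarrow> \<theta> |\<in>| A))"
definition "KL \<pi> \<longleftrightarrow> (\<forall>A B. at A \<longrightarrow> at B \<longrightarrow> Con \<pi> A B \<longrightarrow> (A,B) \<in> mrel \<pi>)"
definition "IL \<pi> \<longleftrightarrow> (\<forall>\<phi> A B. Box \<pi> \<phi> |\<in>| C \<longrightarrow> at A \<longrightarrow> (A,B) \<in> mrel \<pi> \<longrightarrow> Box \<pi> \<phi> |\<in>| A \<longrightarrow> \<phi> |\<in>| B)"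
definition "pin \<pi> \<longleftrightarrow> (\<exists>\<phi>. Box \<pi> \<phi> |\<in>| C)"

lemma KL_At: "KL (At a)"
  unfolding KL_def MR_def by simp

lemma IL_At: "IL (At a)"
  unfolding IL_def
proof (intro allI impI)
  fix \<phi> A B assume c: "Box (At a) \<phi> |\<in>| C" and A: "at A" and AB: "(A, B) \<in> mrel (At a)" and i: "Box (At a) \<phi> |\<in>| A"
  from AB have B: "at B" and con: "Con (At a) A B" unfolding MR_def by auto
  show "\<phi> |\<in>| B"
  proof (rule ccontr)
    assume n: "\<phi> |\<notin>| B"
    have Bs: "B |\<subseteq>| C" using B unfolding at_def by blast
    have "P (finsert (rho B) {|\<phi>|}, {||})" by (rule rhoL[OF Bs]) (rule ax[of \<phi>]; use n C_Box[OF c] in auto)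
    then have "P ({|\<phi>|}, finsert (Neg (rho B)) (BoxC (At a) |`| {||}))" by (simp add: negR)
    then have "P (Box (At a) |`| {|\<phi>|}, finsert (Box (At a) (Neg (rho B))) {||})" by (rule box)
    then have "P (A, finsert (Box (At a) (Neg (rho B))) (C |-| A))" using i by (auto elim: wk)
    then show False using con unfolding Con_def by blast
  qed
qed

lemma KL_Sq: assumes "KL a" "KL b" shows "KL (Sq a b)"
  unfolding KL_def
proof (intro allI impI)
  fix A B assume A: "at A" and B: "at B" and con: "Con (Sq a b) A B"
  show "(A, B) \<in> mrel (Sq a b)"
  proof (cases "\<exists>D. at D \<and> Con a A D \<and> Con b D B")
    case True
    then obtain D where D: "at D" "Con a A D" "Con b D B" by blast
    have "(A,D) \<in> mrel a" "(D,B) \<in> mrel b" using assms A B D unfolding KL_def by blast+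
    then show ?thesis by auto
  next
    case False
    define Z where "Z = ffilter (\<lambda>D. Con b D B) Atoms"
    have "P (A, finsert (Box a (Box b (Neg (rho B)))) (C |-| A))"
    proof (rule boxlift)
      fix D assume "D |\<in>| Z"
      then have "at D" "Con b D B" by (auto simp: Z_def Atoms_iff)
      then show "P (A, finsert (Box a (Neg (rho D))) (C |-| A))" using False unfolding Con_def by blast
    next
      show "P (Neg |`| rho |`| Z, {|Box b (Neg (rho B))|})"
      proof (rule negsplit)
        fix E assume "at E" "E |\<notin>| Z"
        then show "P (E, finsert (Box b (Neg (rho B))) (C |-| E))" by (auto simp: Z_def Atoms_iff Con_def)
      qed
    qed
    then have "P (A, finsert (Box (Sq a b) (Neg (rho B))) (C |-| A))" by (rule sqR)
    then show ?thesis using con unfolding Con_def by blast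
  qed
qed

lemma IL_Sq: assumes "IL a" "IL b" shows "IL (Sq a b)"
  unfolding IL_def
proof (intro allI impI)
  fix \<phi> A B assume c: "Box (Sq a b) \<phi> |\<in>| C" and A: "at A" and AB: "(A, B) \<in> mrel (Sq a b)" and i: "Box (Sq a b) \<phi> |\<in>| A"
  from AB obtain D where D: "(A,D) \<in> mrel a" "(D,B) \<in> mrel b" by auto
  have "Box a (Box b \<phi>) |\<in>| A" by (rule at_Sq[OF A c i])
  then have "Box b \<phi> |\<in>| D" using assms(1) C_Sq[OF c] A D(1) unfolding IL_def by blast
  then show "\<phi> |\<in>| B" using assms(2) C_Sq[OF c] mrel_at[OF D(1)] D(2) unfolding IL_def by blast
qed

lemma KL_Ch: assumes "KL a" "KL b" shows "KL (Ch a b)"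
  unfolding KL_def
proof (intro allI impI)
  fix A B assume A: "at A" and B: "at B" and con: "Con (Ch a b) A B"
  have "Con a A B \<or> Con b A B"
  proof (rule ccontr)
    assume "\<not> ?thesis"
    then have "P (A, finsert (Box (Ch a b) (Neg (rho B))) (C |-| A))" unfolding Con_def by (intro chR) auto
    then show False using con unfolding Con_def by blast
  qed
  then show "(A, B) \<in> mrel (Ch a b)" using assms A B unfolding KL_def by auto
qed

lemma IL_Ch: assumes "IL a" "IL b" shows "IL (Ch a b)"
  unfolding IL_def
proof (intro allI impI)
  fix \<phi> A B assume c: "Box (Ch a b) \<phi> |\<in>| C" and A: "at A" and AB: "(A, B) \<in> mrel (Ch a b)" and i: "Box (Ch a b) \<phi> |\<in>| A"
  have m: "Box a \<phi> |\<in>| A" "Box b \<phi> |\<in>| A" using at_Ch[OF A c i] by auto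
  from AB have "(A,B) \<in> mrel a \<or> (A,B) \<in> mrel b" by simp
  then show "\<phi> |\<in>| B" using assms C_Ch[OF c] A m unfolding IL_def by blast
qed

lemma KL_Test: assumes T: "TL \<psi>" and c: "\<psi> |\<in>| C" shows "KL (Test \<psi>)"
  unfolding KL_def
proof (intro allI impI)
  fix A B assume A: "at A" and B: "at B" and con: "Con (Test \<psi>) A B"
  have pA: "\<psi> |\<in>| A"
  proof (rule ccontr)
    assume n: "\<psi> |\<notin>| A"
    have "P (finsert \<psi> A, finsert (Neg (rho B)) (C |-| A))" by (rule ax[of \<psi>]) (use n c in auto)
    then have "P (A, finsert (Box (Test \<psi>) (Neg (rho B))) (C |-| A))" by (rule testR)
    then show False using con unfolding Con_def by blast
  qed
  have AB: "A = B"
  proof (rule ccontr)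
    assume n: "A \<noteq> B"
    have Bs: "B |\<subseteq>| C" using B unfolding at_def by blast
    have "P (finsert (rho B) (finsert \<psi> A), C |-| A)"
      by (rule rhoL[OF Bs]) (rule at_distinct[OF A B n]; auto)
    then have "P (finsert \<psi> A, finsert (Neg (rho B)) (C |-| A))" by (rule negR)
    then have "P (A, finsert (Box (Test \<psi>) (Neg (rho B))) (C |-| A))" by (rule testR)
    then show False using con unfolding Con_def by blast
  qed
  have "msat A \<psi>" using T c A pA unfolding TL_def by blast
  then show "(A, B) \<in> mrel (Test \<psi>)" using AB A unfolding W0_def by simp
qed

lemma IL_Test: assumes T: "TL \<psi>" shows "IL (Test \<psi>)"
  unfolding IL_def
proof (intro allI impI)
  fix \<phi> A B assume c: "Box (Test \<psi>) \<phi> |\<in>| C" and A: "at A" and AB: "(A, B) \<in> mrel (Test \<psi>)" and i: "Box (Test \<psi>) \<phi> |\<in>| A"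
  from AB have e: "B = A" and s: "msat A \<psi>" by auto
  have "\<psi> |\<in>| A" using T C_Test[OF c] A s unfolding TL_def by blast
  then show "\<phi> |\<in>| B" using at_Test[OF A c i] e by simp
qed

lemma IL_Star: assumes IH: "IL a" shows "IL (Star a)"
  unfolding IL_def
proof (intro allI impI)
  fix \<phi> A B assume c: "Box (Star a) \<phi> |\<in>| C" and A: "at A" and AB: "(A, B) \<in> mrel (Star a)" and i: "Box (Star a) \<phi> |\<in>| A"
  have tr: "Box (Star a) \<phi> |\<in>| D" if "(A, D) \<in> (mrel a)\<^sup>+" for D
    using that
  proof (induction rule: trancl_induct)
    case (base y)
    have "Box a (Box (Star a) \<phi>) |\<in>| A" using at_Star[OF A c i] by blast
    then show ?case using IH C_Star[OF c] A base unfolding IL_def by blast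
  next
    case (step y z)
    have y: "at y" using mrel_at[OF step.hyps(2)] by blast
    have "Box a (Box (Star a) \<phi>) |\<in>| y" using at_Star[OF y c step.IH] by blast
    then show ?case using IH C_Star[OF c] y step.hyps(2) unfolding IL_def by blast
  qed
  from AB have "B = A \<or> (A, B) \<in> (mrel a)\<^sup>+" by auto
  then show "\<phi> |\<in>| B"
  proof
    assume "B = A" then show ?thesis using at_Star[OF A c i] by simp
  next
    assume t: "(A, B) \<in> (mrel a)\<^sup>+"
    have "at B" using mrel_at[of A B "Star a"] AB by blast
    then show ?thesis using at_Star[OF _ c tr[OF t]] by blast
  qed
qed

end


context compl
begin

lemma KL_Star: assumes KLa: "KL a" shows "KL (Star a)"
  unfolding KL_def
proof (intro allI impI)
  fix A B assume A: "at A" and B: "at B" and con: "Con (Star a) A B"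
  show "(A, B) \<in> mrel (Star a)"
  proof (rule ccontr)
    assume nB: "(A, B) \<notin> mrel (Star a)"
    define X where "X = ffilter (\<lambda>D. (A, D) \<in> mrel (Star a)) Atoms"
    define \<chi> where "\<chi> = disjF (rho |`| X)"
    have X_iff: "D |\<in>| X \<longleftrightarrow> at D \<and> (A, D) \<in> mrel (Star a)" for D
      by (auto simp: X_def Atoms_iff)
    have AX: "A |\<in>| X" using A unfolding X_iff by (simp add: W0_def Id_on_def)
    have BX: "B |\<notin>| X" using nB X_iff by blast
    have chiR: "P (D, finsert \<chi> (C |-| D))" if D: "D |\<in>| X" for D
    proof -
      have "P (D, finsert (rho D) (rho |`| X |\<union>| (C |-| D)))" by (rule rhoR) auto
      then have "P (D, rho |`| X |\<union>| (C |-| D))" using D by (auto elim: wk)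
      then show ?thesis unfolding \<chi>_def by (rule disjFR)
    qed
    have step: "P (finsert (disjF (rho |`| X)) {||}, {|Box a \<chi>|})"
    proof (rule disjFL)
      fix x assume "x |\<in>| rho |`| X"
      then obtain D where D: "D |\<in>| X" "x = rho D" by auto
      have Dat: "at D" and AD: "(A, D) \<in> mrel (Star a)" using D X_iff by auto
      have Ds: "D |\<subseteq>| C" using Dat unfolding at_def by blast
      define Y where "Y = ffilter (\<lambda>E. E |\<notin>| X) Atoms"
      have "P (D, finsert (Box a \<chi>) (C |-| D))"
      proof (rule boxlift[of Y])
        fix E assume "E |\<in>| Y"
        then have E: "at E" "E |\<notin>| X" by (auto simp: Y_def Atoms_iff)
        show "P (D, finsert (Box a (Neg (rho E))) (C |-| D))"
        proof (rule ccontr)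
          assume "\<not> ?thesis"
          then have "Con a D E" unfolding Con_def by blast
          then have "(D, E) \<in> mrel a" using KLa Dat E(1) unfolding KL_def by blast
          then have "(A, E) \<in> mrel (Star a)" using AD star_step2[of A D W0 "mrel a" E] by simp
          then show False using E X_iff by blast
        qed
      next
        show "P (Neg |`| rho |`| Y, {|\<chi>|})"
        proof (rule negsplit)
          fix E assume "at E" "E |\<notin>| Y"
          then have "E |\<in>| X" by (auto simp: Y_def Atoms_iff)
          then show "P (E, finsert \<chi> (C |-| E))" by (rule chiR)
        qed
      qed
      then have "P (finsert (rho D) {||}, {|Box a \<chi>|})" by (intro rhoL[OF Ds]) (auto elim: wk)
      then show "P (finsert x {||}, {|Box a \<chi>|})" using D by simp
    qed
    have st: "P ({|\<chi>|}, {|Box (Star a) \<chi>|})" by (rule st0) (use step \<chi>_def in simp)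
    have neg: "P (finsert (disjF (rho |`| X)) {||}, {|Neg (rho B)|})"
    proof (rule disjFL)
      fix x assume "x |\<in>| rho |`| X"
      then obtain D where D: "D |\<in>| X" "x = rho D" by auto
      have Dat: "at D" using D X_iff by auto
      have DB: "D \<noteq> B" using D BX by auto
      have Ds: "D |\<subseteq>| C" "B |\<subseteq>| C" using Dat B unfolding at_def by blast+
      have "P (finsert (rho D) (B |\<union>| {||}), (C |-| B) |\<union>| {||})"
        by (rule rhoL[OF Ds(1)]) (rule at_distinct[OF Dat B DB]; auto)
      then have "P (finsert (rho B) (finsert (rho D) {||}), {||})" by (intro rhoL[OF Ds(2)]) (auto elim: wk)
      then show "P (finsert x {||}, {|Neg (rho B)|})" using D by (simp add: negR)
    qed
    have "P ({|\<chi>|}, finsert (Neg (rho B)) (BoxC (Star a) |`| {||}))" using neg \<chi>_def by simp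
    then have nb: "P (Box (Star a) |`| {|\<chi>|}, finsert (Box (Star a) (Neg (rho B))) {||})" by (rule box)
    let ?G = "finsert (Box (Star a) (Neg (rho B))) (C |-| A)"
    have 1: "P (A, finsert \<chi> ?G)" using chiR[OF AX] by (auto elim: wk)
    have 2: "P (finsert \<chi> A, finsert (Box (Star a) \<chi>) ?G)" using st by (auto elim: wk)
    have 3: "P (finsert (Box (Star a) \<chi>) (finsert \<chi> A), ?G)" using nb by (auto elim: wk)
    have "P (finsert \<chi> A, ?G)" using 2 3 by (rule cut)
    then have "P (A, ?G)" by (rule cut[OF 1])
    then show False using con unfolding Con_def by blast
  qed
qed

lemma TL_Bot: "TL Bot"
  unfolding TL_def using at_Bot by auto

lemma TL_Var: "TL (Var p)"
  unfolding TL_def by (simp add: MV_def)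

lemma TL_Imp: "TL a \<Longrightarrow> TL b \<Longrightarrow> TL (Imp a b)"
  unfolding TL_def using C_Imp at_Imp by (metis sat.simps(3))

lemma TL_Box: assumes K: "KL \<pi>" and I: "IL \<pi>" and T: "TL \<phi>" shows "TL (Box \<pi> \<phi>)"
  unfolding TL_def
proof (intro allI impI)
  fix A assume c: "Box \<pi> \<phi> |\<in>| C" and A: "at A"
  have cphi: "\<phi> |\<in>| C" by (rule C_Box[OF c])
  show "msat A (Box \<pi> \<phi>) \<longleftrightarrow> Box \<pi> \<phi> |\<in>| A"
  proof
    assume s: "msat A (Box \<pi> \<phi>)"
    show "Box \<pi> \<phi> |\<in>| A"
    proof (rule ccontr)
      assume n: "Box \<pi> \<phi> |\<notin>| A"
      define Z where "Z = ffilter (\<lambda>B. \<phi> |\<notin>| B) Atoms"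
      have "P (A, finsert (Box \<pi> \<phi>) (C |-| A))"
      proof (rule boxlift[of Z])
        fix B assume "B |\<in>| Z"
        then have B: "at B" "\<phi> |\<notin>| B" by (auto simp: Z_def Atoms_iff)
        show "P (A, finsert (Box \<pi> (Neg (rho B))) (C |-| A))"
        proof (rule ccontr)
          assume "\<not> ?thesis"
          then have "(A, B) \<in> mrel \<pi>" using K A B unfolding KL_def Con_def by blast
          then have "msat B \<phi>" using s by simp
          then show False using T cphi B unfolding TL_def by blast
        qed
      next
        show "P (Neg |`| rho |`| Z, {|\<phi>|})"
        proof (rule negsplit)
          fix E assume "at E" "E |\<notin>| Z"
          then have "\<phi> |\<in>| E" by (auto simp: Z_def Atoms_iff)
          then show "P (E, finsert \<phi> (C |-| E))" by (intro ax[of \<phi>]) auto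
        qed
      qed
      then show False using at_mem[OF A c n] by blast
    qed
  next
    assume i: "Box \<pi> \<phi> |\<in>| A"
    show "msat A (Box \<pi> \<phi>)"
    proof (simp, intro allI impI)
      fix B assume AB: "(A, B) \<in> mrel \<pi>"
      have "\<phi> |\<in>| B" using I c A AB i unfolding IL_def by blast
      then show "msat B \<phi>" using T cphi mrel_at[OF AB] unfolding TL_def by blast
    qed
  qed
qed

lemma TL_BoxC: assumes K: "KL \<pi>" and I: "IL \<pi>" and T: "TL \<phi>" shows "TL (BoxC \<pi> \<phi>)"
  unfolding TL_def
proof (intro allI impI)
  fix A assume c: "BoxC \<pi> \<phi> |\<in>| C" and A: "at A"
  have cphi: "\<phi> |\<in>| C" and cX: "Box \<pi> (Neg (BoxC \<pi> \<phi>)) |\<in>| C" using C_BoxC[OF c] by auto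
  show "msat A (BoxC \<pi> \<phi>) \<longleftrightarrow> BoxC \<pi> \<phi> |\<in>| A"
  proof
    assume s: "msat A (BoxC \<pi> \<phi>)"
    show "BoxC \<pi> \<phi> |\<in>| A"
    proof (rule ccontr)
      assume n: "BoxC \<pi> \<phi> |\<notin>| A"
      define Z where "Z = ffilter (\<lambda>B. \<phi> |\<notin>| B) Atoms"
      have "P (A, finsert (BoxC \<pi> \<phi>) (C |-| A))"
      proof (rule boxClift[of Z])
        fix B assume "B |\<in>| Z"
        then have B: "at B" "\<phi> |\<notin>| B" by (auto simp: Z_def Atoms_iff)
        have Bs: "B |\<subseteq>| C" "A |\<subseteq>| C" using A B unfolding at_def by blast+
        have h: "P (B, finsert (Box \<pi> (Neg (rho A))) (C |-| B))"
        proof (rule ccontr)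
          assume "\<not> ?thesis"
          then have "(B, A) \<in> mrel \<pi>" using K A B unfolding KL_def Con_def by blast
          then have "msat B \<phi>" using s by simp
          then show False using T cphi B unfolding TL_def by blast
        qed
        have "P (finsert (rho B) {||}, {|Box \<pi> (Neg (rho A))|})" by (rule rhoL[OF Bs(1)]) (use h in \<open>auto elim: wk\<close>)
        then have a: "P ({|rho A|}, {|BoxC \<pi> (Neg (rho B))|})" by (intro adj) simp
        have 1: "P (A, finsert (rho A) (finsert (BoxC \<pi> (Neg (rho B))) (C |-| A)))" by (rule rhoR) auto
        have 2: "P (finsert (rho A) A, finsert (BoxC \<pi> (Neg (rho B))) (C |-| A))" using a by (auto elim: wk)
        from 1 2 show "P (A, finsert (BoxC \<pi> (Neg (rho B))) (C |-| A))" by (rule cut)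
      next
        show "P (Neg |`| rho |`| Z, {|\<phi>|})"
        proof (rule negsplit)
          fix E assume "at E" "E |\<notin>| Z"
          then have "\<phi> |\<in>| E" by (auto simp: Z_def Atoms_iff)
          then show "P (E, finsert \<phi> (C |-| E))" by (intro ax[of \<phi>]) auto
        qed
      qed
      then show False using at_mem[OF A c n] by blast
    qed
  next
    assume i: "BoxC \<pi> \<phi> |\<in>| A"
    show "msat A (BoxC \<pi> \<phi>)"
    proof (simp, intro allI impI)
      fix B assume BA: "(B, A) \<in> mrel \<pi>"
      have B: "at B" using mrel_at[OF BA] by blast
      have "\<phi> |\<in>| B"
      proof (rule ccontr)
        assume nB: "\<phi> |\<notin>| B"
        have XB: "Box \<pi> (Neg (BoxC \<pi> \<phi>)) |\<in>| B"
        proof (rule ccontr)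
          assume nX: "Box \<pi> (Neg (BoxC \<pi> \<phi>)) |\<notin>| B"
          have "P ({|BoxC \<pi> \<phi>|}, {|BoxC \<pi> \<phi>|})" by (rule ax) auto
          then have "P ({||}, finsert (Neg (BoxC \<pi> \<phi>)) (BoxC \<pi> |`| {|\<phi>|}))" by (simp add: negR)
          then have "P (Box \<pi> |`| {||}, finsert (Box \<pi> (Neg (BoxC \<pi> \<phi>))) {|\<phi>|})" by (rule box)
          then have "P (B, C |-| B)" using nX nB cX cphi by (auto elim: wk)
          then show False using B unfolding at_def by blast
        qed
        have "Neg (BoxC \<pi> \<phi>) |\<in>| A" using I cX B BA XB unfolding IL_def by blast
        then have "P (A, C |-| A)" by (rule negL') (rule ax[of "BoxC \<pi> \<phi>"]; use i in auto)
        then show False using A unfolding at_def by blast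
      qed
      then show "msat B \<phi>" using T cphi B unfolding TL_def by blast
    qed
  qed
qed

lemma truth: "TL \<theta>"
proof (induction \<theta> rule: fm.induct[where ?P2.0 = "\<lambda>\<pi>. pin \<pi> \<longrightarrow> KL \<pi> \<and> IL \<pi>"])
  case Bot then show ?case by (rule TL_Bot)
next
  case (Var x) then show ?case by (rule TL_Var)
next
  case (Imp x1 x2) then show ?case by (rule TL_Imp)
next
  case (Box \<pi> \<phi>)
  show ?case unfolding TL_def
  proof (intro allI impI)
    fix A assume c: "Box \<pi> \<phi> |\<in>| C" "at A"
    then have "pin \<pi>" unfolding pin_def by blast
    then have "TL (Box \<pi> \<phi>)" using Box TL_Box by blast
    then show "msat A (Box \<pi> \<phi>) \<longleftrightarrow> Box \<pi> \<phi> |\<in>| A" using c unfolding TL_def by blast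
  qed
next
  case (BoxC \<pi> \<phi>)
  show ?case unfolding TL_def
  proof (intro allI impI)
    fix A assume c: "BoxC \<pi> \<phi> |\<in>| C" "at A"
    then have "pin \<pi>" unfolding pin_def using C_BoxC by blast
    then have "TL (BoxC \<pi> \<phi>)" using BoxC TL_BoxC by blast
    then show "msat A (BoxC \<pi> \<phi>) \<longleftrightarrow> BoxC \<pi> \<phi> |\<in>| A" using c unfolding TL_def by blast
  qed
next
  case (At x) then show ?case using KL_At IL_At by blast
next
  case (Sq x1 x2)
  show ?case
  proof
    assume "pin (Sq x1 x2)"
    then have "pin x1" "pin x2" unfolding pin_def using C_Sq by blast+
    then show "KL (Sq x1 x2) \<and> IL (Sq x1 x2)" using Sq KL_Sq IL_Sq by blast
  qed
next
  case (Ch x1 x2)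
  show ?case
  proof
    assume "pin (Ch x1 x2)"
    then have "pin x1" "pin x2" unfolding pin_def using C_Ch by blast+
    then show "KL (Ch x1 x2) \<and> IL (Ch x1 x2)" using Ch KL_Ch IL_Ch by blast
  qed
next
  case (Star x)
  show ?case
  proof
    assume "pin (Star x)"
    then have "pin x" unfolding pin_def using C_Star by blast
    then show "KL (Star x) \<and> IL (Star x)" using Star KL_Star IL_Star by blast
  qed
next
  case (Test x)
  show ?case
  proof
    assume "pin (Test x)"
    then have "x |\<in>| C" unfolding pin_def using C_Test by blast
    then show "KL (Test x) \<and> IL (Test x)" using Test KL_Test IL_Test by blast
  qed
qed

end


lemma trancl_map:
  assumes r: "r \<subseteq> W \<times> W" and inj: "inj_on h W"
  shows "(map_prod h h ` r)\<^sup>+ = map_prod h h ` r\<^sup>+"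
proof
  show "(map_prod h h ` r)\<^sup>+ \<subseteq> map_prod h h ` r\<^sup>+"
  proof
    fix p assume "p \<in> (map_prod h h ` r)\<^sup>+"
    then obtain x y where p: "p = (x, y)" "(x, y) \<in> (map_prod h h ` r)\<^sup>+" by (cases p) auto
    from p(2) have "(x, y) \<in> map_prod h h ` r\<^sup>+"
    proof (induction rule: trancl_induct)
      case (base y)
      then show ?case by auto
    next
      case (step y z)
      from step.IH obtain a b where ab: "(a, b) \<in> r\<^sup>+" "x = h a" "y = h b" by auto
      from step.hyps(2) obtain b' c where bc: "(b', c) \<in> r" "y = h b'" "z = h c" by auto
      have "b \<in> W" using ab(1) trancl_subset_Sigma[OF r] by blast
      moreover have "b' \<in> W" using bc(1) r by blast
      ultimately have "b = b'" using inj ab(3) bc(2) by (simp add: inj_on_eq_iff)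
      then have "(a, c) \<in> r\<^sup>+" using ab(1) bc(1) by auto
      then show ?case using ab bc by force
    qed
    then show "p \<in> map_prod h h ` r\<^sup>+" using p by simp
  qed
next
  show "map_prod h h ` r\<^sup>+ \<subseteq> (map_prod h h ` r)\<^sup>+"
  proof
    fix p assume "p \<in> map_prod h h ` r\<^sup>+"
    then obtain a b where p: "p = (h a, h b)" "(a, b) \<in> r\<^sup>+" by auto
    from p(2) have "(h a, h b) \<in> (map_prod h h ` r)\<^sup>+"
    proof (induction rule: trancl_induct)
      case (base y)
      then show ?case by (intro r_into_trancl) force
    next
      case (step y z)
      have "(h y, h z) \<in> map_prod h h ` r" using step.hyps(2) by force
      then show ?case by (rule trancl_into_trancl[OF step.IH])
    qed
    then show "p \<in> (map_prod h h ` r)\<^sup>+" using p by simp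
  qed
qed

lemma relcomp_map:
  assumes r: "r \<subseteq> W \<times> W" "s \<subseteq> W \<times> W" and inj: "inj_on h W"
  shows "map_prod h h ` r O map_prod h h ` s = map_prod h h ` (r O s)"
proof
  show "map_prod h h ` r O map_prod h h ` s \<subseteq> map_prod h h ` (r O s)"
  proof
    fix p assume "p \<in> map_prod h h ` r O map_prod h h ` s"
    then obtain a b b' c where ab: "(a, b) \<in> r" "(b', c) \<in> s" "h b = h b'" "p = (h a, h c)" by blast
    have "b \<in> W" "b' \<in> W" using ab r by auto
    then have "b = b'" using inj ab(3) by (simp add: inj_on_eq_iff)
    then show "p \<in> map_prod h h ` (r O s)" using ab by force
  qed
next
  show "map_prod h h ` (r O s) \<subseteq> map_prod h h ` r O map_prod h h ` s" by force
qed

lemma transfer_sat: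
  fixes h :: "'w \<Rightarrow> 'v" and W :: "'w set"
  assumes RW: "\<forall>a. R a \<subseteq> W \<times> W" and inj: "inj_on h W"
  shows "\<forall>w\<in>W. sat (h ` W) (\<lambda>a. map_prod h h ` R a) (\<lambda>n. V (inv_into W h n)) (h w) \<theta> = sat W R V w \<theta>"
proof (induction \<theta> rule: fm.induct[where ?P2.0 = "\<lambda>\<pi>. rel (h ` W) (\<lambda>a. map_prod h h ` R a) (\<lambda>n. V (inv_into W h n)) \<pi> = map_prod h h ` rel W R V \<pi>"])
  case (Var x)
  then show ?case using inj by simp
next
  case (Imp x1 x2)
  then show ?case by simp
next
  case (Box \<pi> \<phi>)
  let ?s = "sat (h ` W) (\<lambda>a. map_prod h h ` R a) (\<lambda>n. V (inv_into W h n))"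
  let ?r = "rel (h ` W) (\<lambda>a. map_prod h h ` R a) (\<lambda>n. V (inv_into W h n))"
  have e: "?r \<pi> = map_prod h h ` rel W R V \<pi>" by (rule Box(1))
  have ih: "\<And>v. v \<in> W \<Longrightarrow> ?s (h v) \<phi> = sat W R V v \<phi>" using Box(2) by blast
  show ?case
  proof
    fix w assume w: "w \<in> W"
    show "?s (h w) (Box \<pi> \<phi>) = sat W R V w (Box \<pi> \<phi>)"
    proof
      assume L: "?s (h w) (Box \<pi> \<phi>)"
      show "sat W R V w (Box \<pi> \<phi>)"
      proof (simp only: sat.simps, intro allI impI)
        fix v assume wv: "(w, v) \<in> rel W R V \<pi>"
        then have "(h w, h v) \<in> ?r \<pi>" using e by force
        then have "?s (h v) \<phi>" using L by simp
        moreover have "v \<in> W" using wv rel_sub[OF RW] by blast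
        ultimately show "sat W R V v \<phi>" using ih by blast
      qed
    next
      assume Rt: "sat W R V w (Box \<pi> \<phi>)"
      show "?s (h w) (Box \<pi> \<phi>)"
      proof (simp only: sat.simps, intro allI impI)
        fix v' assume "(h w, v') \<in> ?r \<pi>"
        then obtain a b where ab: "(a, b) \<in> rel W R V \<pi>" "h a = h w" "v' = h b" using e by force
        have "a \<in> W" "b \<in> W" using ab(1) rel_sub[OF RW] by blast+
        then have "a = w" using inj ab(2) w by (simp add: inj_on_eq_iff)
        then have "sat W R V b \<phi>" using Rt ab(1) by simp
        then show "?s v' \<phi>" using ih \<open>b \<in> W\<close> ab(3) by blast
      qed
    qed
  qed
next
  case (BoxC \<pi> \<phi>)
  let ?s = "sat (h ` W) (\<lambda>a. map_prod h h ` R a) (\<lambda>n. V (inv_into W h n))"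
  let ?r = "rel (h ` W) (\<lambda>a. map_prod h h ` R a) (\<lambda>n. V (inv_into W h n))"
  have e: "?r \<pi> = map_prod h h ` rel W R V \<pi>" by (rule BoxC(1))
  have ih: "\<And>v. v \<in> W \<Longrightarrow> ?s (h v) \<phi> = sat W R V v \<phi>" using BoxC(2) by blast
  show ?case
  proof
    fix w assume w: "w \<in> W"
    show "?s (h w) (BoxC \<pi> \<phi>) = sat W R V w (BoxC \<pi> \<phi>)"
    proof
      assume L: "?s (h w) (BoxC \<pi> \<phi>)"
      show "sat W R V w (BoxC \<pi> \<phi>)"
      proof (simp only: sat.simps, intro allI impI)
        fix v assume wv: "(v, w) \<in> rel W R V \<pi>"
        then have "(h v, h w) \<in> ?r \<pi>" using e by force
        then have "?s (h v) \<phi>" using L by simp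
        moreover have "v \<in> W" using wv rel_sub[OF RW] by blast
        ultimately show "sat W R V v \<phi>" using ih by blast
      qed
    next
      assume Rt: "sat W R V w (BoxC \<pi> \<phi>)"
      show "?s (h w) (BoxC \<pi> \<phi>)"
      proof (simp only: sat.simps, intro allI impI)
        fix v' assume "(v', h w) \<in> ?r \<pi>"
        then obtain a b where ab: "(b, a) \<in> rel W R V \<pi>" "h a = h w" "v' = h b" using e by force
        have "a \<in> W" "b \<in> W" using ab(1) rel_sub[OF RW] by blast+
        then have "a = w" using inj ab(2) w by (simp add: inj_on_eq_iff)
        then have "sat W R V b \<phi>" using Rt ab(1) by simp
        then show "?s v' \<phi>" using ih \<open>b \<in> W\<close> ab(3) by blast
      qed
    qed
  qed
next
  case (Sq x1 x2)
  then show ?case using relcomp_map[OF rel_sub[OF RW] rel_sub[OF RW] inj] by simp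
next
  case (Ch x1 x2)
  then show ?case by (simp add: image_Un)
next
  case (Star x)
  have "Id_on (h ` W) = map_prod h h ` Id_on W" by (auto simp: Id_on_def)
  then show ?case using Star trancl_map[OF rel_sub[OF RW, of V x] inj] by (simp add: image_Un)
next
  case (Test x)
  let ?s = "sat (h ` W) (\<lambda>a. map_prod h h ` R a) (\<lambda>n. V (inv_into W h n))"
  have ih: "\<And>v. v \<in> W \<Longrightarrow> ?s (h v) x = sat W R V v x" using Test by blast
  show ?case
  proof (intro equalityI subsetI)
    fix p assume "p \<in> rel (h ` W) (\<lambda>a. map_prod h h ` R a) (\<lambda>n. V (inv_into W h n)) (Test x)"
    then obtain w where w: "p = (h w, h w)" "w \<in> W" "?s (h w) x" by auto
    then have "(w, w) \<in> rel W R V (Test x)" using ih by simp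
    then show "p \<in> map_prod h h ` rel W R V (Test x)" using w(1) by (intro image_eqI[of _ _ "(w,w)"]) simp_all
  next
    fix p assume "p \<in> map_prod h h ` rel W R V (Test x)"
    then obtain w where w: "p = (h w, h w)" "w \<in> W" "sat W R V w x" by auto
    then have "?s (h w) x" using ih by simp
    then show "p \<in> rel (h ` W) (\<lambda>a. map_prod h h ` R a) (\<lambda>n. V (inv_into W h n)) (Test x)" using w by auto
  qed
next
  case (At a) show ?case by simp
next
  case Bot show ?case by simp
qed

definition clS :: "('p,'a) seq \<Rightarrow> ('p,'a) fm fset" where
  "clS S = Abs_fset (\<Union> (clF ` (fset (fst S) \<union> fset (snd S))))"

lemma clS_fset: "fset (clS S) = \<Union> (clF ` (fset (fst S) \<union> fset (snd S)))"
  unfolding clS_def by (rule Abs_fset_inverse) (simp add: cl_finite)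

context prov
begin

theorem completeness:
  assumes v: "valid TYPE(nat) S"
  shows "P S"
proof (rule ccontr)
  assume nP: "\<not> P S"
  define C where "C = clS S"
  have Ccl: "clF y \<subseteq> fset C" if y: "y |\<in>| C" for y
  proof -
    from y obtain x where x: "x \<in> fset (fst S) \<union> fset (snd S)" "y \<in> clF x"
      unfolding C_def using clS_fset[of S] by blast
    have "clF y \<subseteq> clF x" by (rule cl_closed[OF x(2)])
    moreover have "clF x \<subseteq> fset C" using x(1) unfolding C_def clS_fset by blast
    ultimately show ?thesis by blast
  qed
  interpret compl P C by unfold_locales (rule Ccl)
  have sub: "fst S |\<subseteq>| C" "snd S |\<subseteq>| C"
  proof -
    have "x |\<in>| C" if "x \<in> fset (fst S) \<union> fset (snd S)" for x
      using that clF_self[of x] unfolding C_def clS_fset by blast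
    then show "fst S |\<subseteq>| C" "snd S |\<subseteq>| C" by blast+
  qed
  have nP': "\<not> P (fst S, snd S)" using nP by simp
  obtain A0 where A0: "at A0" "fst S |\<subseteq>| A0" "snd S |\<subseteq>| C |-| A0" using lindenbaum[OF sub nP'] by blast
  have fin: "finite W0"
  proof -
    have "W0 \<subseteq> fset (fPow C)"
    proof
      fix A assume "A \<in> W0"
      then have "A |\<subseteq>| C" by (simp add: W0_def at_def)
      then show "A \<in> fset (fPow C)" by (rule fPowI)
    qed
    then show ?thesis by (rule finite_subset) simp
  qed
  obtain h :: "('p,'a) fm fset \<Rightarrow> nat" and n where h: "h ` W0 = {i. i < n}" "inj_on h W0"
    using finite_imp_inj_to_nat_seg[OF fin] by blast
  have A0W: "A0 \<in> W0" using A0 unfolding W0_def by simp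
  let ?W = "h ` W0"
  let ?R = "\<lambda>a. map_prod h h ` MR a"
  let ?V = "\<lambda>n. MV (inv_into W0 h n)"
  have RW': "\<forall>a. ?R a \<subseteq> ?W \<times> ?W"
  proof
    fix a show "?R a \<subseteq> ?W \<times> ?W"
    proof
      fix p assume "p \<in> ?R a"
      then obtain x y where xy: "(x, y) \<in> MR a" "p = (h x, h y)" by auto
      then have "x \<in> W0" "y \<in> W0" using MRW by blast+
      then show "p \<in> ?W \<times> ?W" using xy(2) by simp
    qed
  qed
  have tr: "sat ?W ?R ?V (h A0) \<theta> = msat A0 \<theta>" for \<theta>
    using bspec[OF transfer_sat[OF MRW h(2), of MV \<theta>] A0W] .
  have L: "\<forall>\<phi>. \<phi> |\<in>| fst S \<longrightarrow> sat ?W ?R ?V (h A0) \<phi>"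
  proof (intro allI impI)
    fix \<phi> assume "\<phi> |\<in>| fst S"
    then have "\<phi> |\<in>| C" "\<phi> |\<in>| A0" using sub A0 by auto
    then have "msat A0 \<phi>" using truth[of \<phi>] A0(1) unfolding TL_def by blast
    then show "sat ?W ?R ?V (h A0) \<phi>" using tr by simp
  qed
  have ne: "?W \<noteq> {}" using A0W by blast
  have hA: "h A0 \<in> ?W" using A0W by simp
  have vv: "\<forall>(W :: nat set) R V. W \<noteq> {} \<and> (\<forall>a. R a \<subseteq> W \<times> W) \<longrightarrow>
        (\<forall>w \<in> W. (\<forall>\<phi>. \<phi> |\<in>| fst S \<longrightarrow> sat W R V w \<phi>) \<longrightarrow> (\<exists>\<psi>. \<psi> |\<in>| snd S \<and> sat W R V w \<psi>))"
    using v unfolding valid_def .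
  have "\<exists>\<psi>. \<psi> |\<in>| snd S \<and> sat ?W ?R ?V (h A0) \<psi>"
    using vv[rule_format, of ?W ?R "h A0" ?V] ne RW' hA L by blast
  then obtain \<psi> where \<psi>: "\<psi> |\<in>| snd S" "sat ?W ?R ?V (h A0) \<psi>" by blast
  then have "\<psi> |\<in>| C" "\<psi> |\<notin>| A0" using sub A0 by auto
  moreover have "msat A0 \<psi>" using \<psi>(2) tr by simp
  ultimately show False using truth[of \<psi>] A0(1) unfolding TL_def by blast
qed

end

interpretation gp: prov gprov
proof
  fix r S Ps assume c: "common r S Ps" and h: "\<And>Q. Q \<in> set Ps \<Longrightarrow> gprov Q"
  have "ginst r S Ps" using c by (rule ginst.gcommon)
  then show "gprov S" by (rule gprov.intros) (use h in blast)
next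
  fix \<chi> \<pi> assume h: "gprov ({|\<chi>|}, {|Box \<pi> \<chi>|})"
  have "ginst (RStarR \<pi> \<chi>) (finsert \<chi> (Box (Star \<pi>) |`| {||}), {|Box (Star \<pi>) \<chi>|}) [(finsert \<chi> {||}, {|Box \<pi> \<chi>|})]"
    by (rule ginst.StarR)
  then have "ginst (RStarR \<pi> \<chi>) ({|\<chi>|}, {|Box (Star \<pi>) \<chi>|}) [({|\<chi>|}, {|Box \<pi> \<chi>|})]" by simp
  then show "gprov ({|\<chi>|}, {|Box (Star \<pi>) \<chi>|})" by (rule gprov.intros) (use h in simp)
qed

theorem gprov_valid_iff: "gprov S \<longleftrightarrow> valid TYPE(nat) S"
  using gprov_sound gp.completeness by blast


definition enc :: "nat \<Rightarrow> nat \<Rightarrow> nat \<Rightarrow> nat" where "enc K j m = K + prod_encode (j, m)"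
definition dj :: "nat \<Rightarrow> nat \<Rightarrow> nat" where "dj K n = fst (prod_decode (n - K))"
definition dm :: "nat \<Rightarrow> nat \<Rightarrow> nat" where "dm K n = snd (prod_decode (n - K))"

lemma enc_ge: "K \<le> enc K j m" by (simp add: enc_def)
lemma dj_enc[simp]: "dj K (enc K j m) = j" by (simp add: dj_def enc_def)
lemma dm_enc[simp]: "dm K (enc K j m) = m" by (simp add: dm_def enc_def)
lemma enc_inj[simp]: "enc K j m = enc K j' m' \<longleftrightarrow> j = j' \<and> m = m'"
  by (metis dj_enc dm_enc)
lemma enc_not_less[simp]: "\<not> enc K j m < K" by (simp add: enc_def)
lemma enc_dec: "K \<le> n \<Longrightarrow> enc K (dj K n) (dm K n) = n"
  by (simp add: enc_def dj_def dm_def)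

definition gN :: "nat \<Rightarrow> nat \<Rightarrow> (nat \<Rightarrow> nat set) \<Rightarrow> nat set" where
  "gN K J Ns = {0..<K} \<union> (\<Union>j\<in>{..<J}. enc K j ` Ns j)"
definition gch :: "nat \<Rightarrow> (nat \<Rightarrow> nat list) \<Rightarrow> (nat \<Rightarrow> nat \<Rightarrow> nat list) \<Rightarrow> nat \<Rightarrow> nat list" where
  "gch K chT chs n = (if n < K then chT n else map (enc K (dj K n)) (chs (dj K n) (dm K n)))"
definition gsel :: "nat \<Rightarrow> (nat \<Rightarrow> 'x) \<Rightarrow> (nat \<Rightarrow> nat \<Rightarrow> 'x) \<Rightarrow> nat \<Rightarrow> 'x" where
  "gsel K T S n = (if n < K then T n else S (dj K n) (dm K n))"
definition gcp :: "nat \<Rightarrow> (nat \<Rightarrow> nat option) \<Rightarrow> (nat \<Rightarrow> nat \<Rightarrow> nat option) \<Rightarrow> nat \<Rightarrow> nat option" where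
  "gcp K cpT cps n = (if n < K then cpT n else map_option (enc K (dj K n)) (cps (dj K n) (dm K n)))"

lemma gch_enc[simp]: "gch K chT chs (enc K j m) = map (enc K j) (chs j m)" by (simp add: gch_def)
lemma gsel_enc[simp]: "gsel K T S (enc K j m) = S j m" by (simp add: gsel_def)
lemma gcp_enc[simp]: "gcp K cpT cps (enc K j m) = map_option (enc K j) (cps j m)" by (simp add: gcp_def)
lemma gch_top[simp]: "n < K \<Longrightarrow> gch K chT chs n = chT n" by (simp add: gch_def)
lemma gsel_top[simp]: "n < K \<Longrightarrow> gsel K T S n = T n" by (simp add: gsel_def)
lemma gcp_top[simp]: "n < K \<Longrightarrow> gcp K cpT cps n = cpT n" by (simp add: gcp_def)

lemma gN_cases: "n \<in> gN K J Ns \<Longrightarrow> n < K \<or> (\<exists>j<J. \<exists>a\<in>Ns j. n = enc K j a)"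
  unfolding gN_def by auto

lemma gN_enc[simp]: "enc K j a \<in> gN K J Ns \<longleftrightarrow> j < J \<and> a \<in> Ns j"
  unfolding gN_def by auto

lemma gN_top[simp]: "n < K \<Longrightarrow> n \<in> gN K J Ns"
  unfolding gN_def by auto

lemma pp_parts:
  assumes "preproof N rt ch sq lb cp"
  shows "finite N" "rt \<in> N" "\<And>n. n \<in> N \<Longrightarrow> set (ch n) \<subseteq> N \<and> distinct (ch n)"
    "\<And>n. n \<in> N \<Longrightarrow> rt \<notin> set (ch n)"
    "\<And>m. m \<in> N \<Longrightarrow> m \<noteq> rt \<Longrightarrow> (\<exists>!n. n \<in> N \<and> m \<in> set (ch n))"
    "\<And>m. m \<in> N \<Longrightarrow> (rt, m) \<in> (tedges N ch)\<^sup>*"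
    "acyclic (tedges N ch)"
  using assms unfolding preproof_def by blast+


lemma resolve_enc: "resolve (gcp K cpT cps) (enc K j b) = enc K j (resolve (cps j) b)"
  by (simp add: resolve_def split: option.splits)

locale glue =
  fixes K J :: nat and Ns :: "nat \<Rightarrow> nat set" and rts :: "nat \<Rightarrow> nat" and chs :: "nat \<Rightarrow> nat \<Rightarrow> nat list"
    and sqs :: "nat \<Rightarrow> nat \<Rightarrow> ('p,'a) seq" and lbs :: "nat \<Rightarrow> nat \<Rightarrow> ('p,'a) rl" and cps :: "nat \<Rightarrow> nat \<Rightarrow> nat option"
    and chT :: "nat \<Rightarrow> nat list" and sqT :: "nat \<Rightarrow> ('p,'a) seq" and lbT :: "nat \<Rightarrow> ('p,'a) rl" and cpT :: "nat \<Rightarrow> nat option"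
  assumes K0: "0 < K"
    and subs: "\<And>j. j < J \<Longrightarrow> preproof (Ns j) (rts j) (chs j) (sqs j) (lbs j) (cps j) \<and> global_trace_condition (Ns j) (chs j) (sqs j) (lbs j) (cps j)"
    and T1: "\<And>n c. n < K \<Longrightarrow> c \<in> set (chT n) \<Longrightarrow> c < K \<or> (\<exists>j<J. c = enc K j (rts j))"
    and T1d: "\<And>n. n < K \<Longrightarrow> distinct (chT n)"
    and T2: "\<And>n. n < K \<Longrightarrow> 0 \<notin> set (chT n)"
    and T3: "\<And>m. m < K \<Longrightarrow> m \<noteq> 0 \<Longrightarrow> \<exists>!n. n < K \<and> m \<in> set (chT n)"
    and T4: "\<And>j. j < J \<Longrightarrow> \<exists>!n. n < K \<and> enc K j (rts j) \<in> set (chT n)"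
    and T5: "\<And>m. m < K \<Longrightarrow> (0, m) \<in> {(n, m). n < K \<and> m < K \<and> m \<in> set (chT n)}\<^sup>*"
    and T6: "acyclic {(n, m). n < K \<and> m < K \<and> m \<in> set (chT n)}"
    and T7: "\<And>n. n < K \<Longrightarrow> (case cpT n of Some c \<Rightarrow> chT n = [] \<and> c < K \<and> cpT c = None \<and> chT c \<noteq> [] \<and> sqT c = sqT n
                                  | None \<Rightarrow> cinst (lbT n) (sqT n) (map (gsel K sqT sqs) (chT n)))"
    and T8: "\<And>f idx. (\<And>k. f k < K) \<Longrightarrow> (\<And>k. idx k < length (chT (f k)) \<and> f (Suc k) = resolve cpT (chT (f k) ! idx k)) \<Longrightarrow>
       \<exists>k0 \<tau>. (\<forall>k\<ge>k0. \<tau> k |\<in>| snd (sqT (f k)) \<and> tstep (lbT (f k)) (idx k) (\<tau> k) (\<tau> (Suc k))) \<and>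
              (\<forall>m. \<exists>k\<ge>max m k0. progress (lbT (f k)) (idx k) (\<tau> k) (\<tau> (Suc k)))"
begin

abbreviation "GN \<equiv> gN K J Ns"
abbreviation "Gch \<equiv> gch K chT chs"
abbreviation "Gsq \<equiv> gsel K sqT sqs"
abbreviation "Glb \<equiv> gsel K lbT lbs"
abbreviation "Gcp \<equiv> gcp K cpT cps"
abbreviation "E \<equiv> tedges GN Gch"
abbreviation "ET \<equiv> {(n, m). n < K \<and> m < K \<and> m \<in> set (chT n)}"
abbreviation "Es j \<equiv> tedges (Ns j) (chs j)"

lemma spp: "j < J \<Longrightarrow> preproof (Ns j) (rts j) (chs j) (sqs j) (lbs j) (cps j)" using subs by blast
lemma sgtc: "j < J \<Longrightarrow> global_trace_condition (Ns j) (chs j) (sqs j) (lbs j) (cps j)" using subs by blast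

lemma ch_sub: "n \<in> GN \<Longrightarrow> set (Gch n) \<subseteq> GN \<and> distinct (Gch n)"
proof -
  assume n: "n \<in> GN"
  from gN_cases[OF n] show ?thesis
  proof
    assume nK: "n < K"
    have "c \<in> GN" if "c \<in> set (chT n)" for c
      using T1[OF nK that] pp_parts(2)[OF spp] by auto
    then show ?thesis using nK T1d by auto
  next
    assume "\<exists>j<J. \<exists>a\<in>Ns j. n = enc K j a"
    then obtain j a where ja: "j < J" "a \<in> Ns j" "n = enc K j a" by blast
    have "set (chs j a) \<subseteq> Ns j" "distinct (chs j a)" using pp_parts(3)[OF spp[OF ja(1)] ja(2)] by auto
    then show ?thesis using ja by (auto simp: distinct_map inj_on_def)
  qed
qed

lemma edge_iff: "(n, m) \<in> E \<longleftrightarrow> n \<in> GN \<and> m \<in> set (Gch n)"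
  by (simp add: tedges_def)

lemma edge_top: "n < K \<Longrightarrow> (n, m) \<in> E \<longleftrightarrow> m \<in> set (chT n)"
  by (simp add: tedges_def)

lemma edge_sub: "j < J \<Longrightarrow> (enc K j a, m) \<in> E \<longleftrightarrow> (\<exists>b. m = enc K j b \<and> (a, b) \<in> Es j)"
  by (auto simp: tedges_def)

lemma edge_ge: "(n, m) \<in> E \<Longrightarrow> K \<le> n \<Longrightarrow> \<exists>j<J. \<exists>a b. n = enc K j a \<and> m = enc K j b \<and> (a, b) \<in> Es j"
proof -
  assume e: "(n, m) \<in> E" and nK: "K \<le> n"
  then have "n \<in> GN" by (simp add: tedges_def)
  then obtain j a where ja: "j < J" "a \<in> Ns j" "n = enc K j a" using gN_cases nK by force
  then show ?thesis using e edge_sub by blast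
qed

lemma from_ge: "(x, y) \<in> E\<^sup>+ \<Longrightarrow> K \<le> x \<Longrightarrow> \<exists>j<J. \<exists>a b. x = enc K j a \<and> y = enc K j b \<and> (a, b) \<in> (Es j)\<^sup>+"
proof (induction rule: trancl_induct)
  case (base y)
  then show ?case using edge_ge by blast
next
  case (step y z)
  then obtain j a b where jab: "j < J" "x = enc K j a" "y = enc K j b" "(a, b) \<in> (Es j)\<^sup>+" by blast
  then obtain c where c: "z = enc K j c" "(b, c) \<in> Es j" using step.hyps(2) edge_sub by blast
  have "(a, c) \<in> (Es j)\<^sup>+" using jab(4) c(2) by (rule trancl_into_trancl)
  then show ?case using jab c by blast
qed

lemma from_top: "(x, y) \<in> E\<^sup>+ \<Longrightarrow> x < K \<Longrightarrow> (y < K \<and> (x, y) \<in> ET\<^sup>+) \<or> K \<le> y"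
proof (induction rule: trancl_induct)
  case (base y)
  then show ?case using edge_top[of x y] by (cases "y < K") auto
next
  case (step y z)
  show ?case
  proof (cases "y < K")
    case True
    with step have yET: "(x, y) \<in> ET\<^sup>+" by auto
    have "z \<in> set (chT y)" using step.hyps(2) edge_top[OF True] by blast
    then show ?thesis using yET True by (cases "z < K") (auto intro: trancl_into_trancl)
  next
    case False
    then show ?thesis using edge_ge[OF step.hyps(2)] enc_ge by auto
  qed
qed

lemma acyc: "acyclic E"
  unfolding acyclic_def
proof
  fix x show "(x, x) \<notin> E\<^sup>+"
  proof
    assume xx: "(x, x) \<in> E\<^sup>+"
    show False
    proof (cases "x < K")
      case True
      then have "(x, x) \<in> ET\<^sup>+" using from_top[OF xx] by auto
      then show False using T6 unfolding acyclic_def by blast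
    next
      case False
      then obtain j a b where jab: "j < J" "x = enc K j a" "x = enc K j b" "(a, b) \<in> (Es j)\<^sup>+" using from_ge[OF xx] by auto
      then have "(a, a) \<in> (Es j)\<^sup>+" by simp
      then show False using pp_parts(7)[OF spp[OF jab(1)]] unfolding acyclic_def by blast
    qed
  qed
qed

lemma sub_reach: "j < J \<Longrightarrow> (a, b) \<in> (Es j)\<^sup>* \<Longrightarrow> (enc K j a, enc K j b) \<in> E\<^sup>*"
proof -
  assume j: "j < J" and ab: "(a, b) \<in> (Es j)\<^sup>*"
  from ab show ?thesis
  proof (induction rule: rtrancl_induct)
    case base then show ?case by simp
  next
    case (step y z)
    have "(enc K j y, enc K j z) \<in> E" using step j edge_sub by blast
    then show ?case using step by (meson rtrancl.rtrancl_into_rtrancl)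
  qed
qed

lemma reach: "m \<in> GN \<Longrightarrow> (0, m) \<in> E\<^sup>*"
proof -
  have ETE: "ET \<subseteq> E" using edge_top by auto
  have top: "(0, m) \<in> E\<^sup>*" if "m < K" for m using T5[OF that] rtrancl_mono[OF ETE] by blast
  assume m: "m \<in> GN"
  from gN_cases[OF m] show ?thesis
  proof
    assume "m < K" then show ?thesis by (rule top)
  next
    assume "\<exists>j<J. \<exists>a\<in>Ns j. m = enc K j a"
    then obtain j b where jb: "j < J" "b \<in> Ns j" "m = enc K j b" by blast
    obtain n where n: "n < K" "enc K j (rts j) \<in> set (chT n)" using T4[OF jb(1)] by blast
    have 1: "(0, n) \<in> E\<^sup>*" by (rule top[OF n(1)])
    have 2: "(n, enc K j (rts j)) \<in> E" using n edge_top by blast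
    have 3: "(enc K j (rts j), m) \<in> E\<^sup>*" using sub_reach[OF jb(1) pp_parts(6)[OF spp[OF jb(1)] jb(2)]] jb(3) by simp
    show ?thesis using 1 2 3 by (meson rtrancl.rtrancl_into_rtrancl rtrancl_trans)
  qed
qed

lemma parent: "m \<in> GN \<Longrightarrow> m \<noteq> 0 \<Longrightarrow> \<exists>!n. n \<in> GN \<and> m \<in> set (Gch n)"
proof -
  assume m: "m \<in> GN" and m0: "m \<noteq> 0"
  have subpar: "K \<le> m" if "n \<in> GN" "m \<in> set (Gch n)" "K \<le> n" for n
    using that edge_ge[of n m] by (auto simp: tedges_def enc_ge)
  from gN_cases[OF m] show ?thesis
  proof
    assume mK: "m < K"
    obtain n where n: "n < K" "m \<in> set (chT n)" and u: "\<And>n'. n' < K \<Longrightarrow> m \<in> set (chT n') \<Longrightarrow> n' = n"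
      using T3[OF mK m0] by blast
    show ?thesis
    proof (rule ex1I[of _ n])
      show "n \<in> GN \<and> m \<in> set (Gch n)" using n by simp
    next
      fix n' assume "n' \<in> GN \<and> m \<in> set (Gch n')"
      then show "n' = n" using u subpar[of n'] mK by (cases "n' < K") auto
    qed
  next
    assume "\<exists>j<J. \<exists>a\<in>Ns j. m = enc K j a"
    then obtain j b where jb: "j < J" "b \<in> Ns j" "m = enc K j b" by blast
    show ?thesis
    proof (cases "b = rts j")
      case True
      obtain n where n: "n < K" "m \<in> set (chT n)" and u: "\<And>n'. n' < K \<Longrightarrow> m \<in> set (chT n') \<Longrightarrow> n' = n"
        using T4[OF jb(1)] jb(3) True by blast
      show ?thesis
      proof (rule ex1I[of _ n])
        show "n \<in> GN \<and> m \<in> set (Gch n)" using n by simp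
      next
        fix n' assume n': "n' \<in> GN \<and> m \<in> set (Gch n')"
        show "n' = n"
        proof (cases "n' < K")
          case True then show ?thesis using u n' by simp
        next
          case False
          then obtain j' a where ja: "j' < J" "a \<in> Ns j'" "n' = enc K j' a" using gN_cases n' by force
          then have "m \<in> set (map (enc K j') (chs j' a))" using n' by simp
          then have "j' = j" "rts j \<in> set (chs j a)" using jb True ja by auto
          then show ?thesis using pp_parts(4)[OF spp[OF jb(1)]] ja by blast
        qed
      qed
    next
      case False
      obtain a where a: "a \<in> Ns j" "b \<in> set (chs j a)" and u: "\<And>a'. a' \<in> Ns j \<Longrightarrow> b \<in> set (chs j a') \<Longrightarrow> a' = a"
        using pp_parts(5)[OF spp[OF jb(1)] jb(2) False] by blast
      show ?thesis
      proof (rule ex1I[of _ "enc K j a"])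
        show "enc K j a \<in> GN \<and> m \<in> set (Gch (enc K j a))" using a jb by simp
      next
        fix n' assume n': "n' \<in> GN \<and> m \<in> set (Gch n')"
        show "n' = enc K j a"
        proof (cases "n' < K")
          case True
          then have "m \<in> set (chT n')" using n' by simp
          from T1[OF True this] show ?thesis using jb False by auto
        next
          case nK: False
          then obtain j' a' where ja: "j' < J" "a' \<in> Ns j'" "n' = enc K j' a'" using gN_cases n' by force
          then have "m \<in> set (map (enc K j') (chs j' a'))" using n' by simp
          then have "j' = j" "b \<in> set (chs j a')" using jb ja by auto
          then show ?thesis using u ja by auto
        qed
      qed
    qed
  qed
qed

lemma nodes: "n \<in> GN \<Longrightarrow> (case Gcp n of Some c \<Rightarrow> Gch n = [] \<and> c \<in> GN \<and> Gcp c = None \<and> Gch c \<noteq> [] \<and> Gsq c = Gsq n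
                                  | None \<Rightarrow> cinst (Glb n) (Gsq n) (map Gsq (Gch n)))"
proof -
  assume n: "n \<in> GN"
  from gN_cases[OF n] show ?thesis
  proof
    assume nK: "n < K"
    show ?thesis using T7[OF nK] nK by (auto split: option.splits)
  next
    assume "\<exists>j<J. \<exists>a\<in>Ns j. n = enc K j a"
    then obtain j a where ja: "j < J" "a \<in> Ns j" "n = enc K j a" by blast
    have h: "case cps j a of Some c \<Rightarrow> chs j a = [] \<and> c \<in> Ns j \<and> cps j c = None \<and> chs j c \<noteq> [] \<and> sqs j c = sqs j a
         | None \<Rightarrow> cinst (lbs j a) (sqs j a) (map (sqs j) (chs j a))" by (rule pp_nodes[OF spp[OF ja(1)] ja(2)])
    have m: "Gsq \<circ> enc K j = sqs j" by (rule ext) simp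
    show ?thesis using h ja m by (auto split: option.splits)
  qed
qed

lemma pp: "preproof GN 0 Gch Gsq Glb Gcp"
  unfolding preproof_def
proof (intro conjI ballI impI)
  show "finite GN" unfolding gN_def using pp_parts(1)[OF spp] by auto
  show "0 \<in> GN" using K0 by simp
  show "set (Gch n) \<subseteq> GN" if "n \<in> GN" for n using ch_sub[OF that] by blast
  show "distinct (Gch n)" if "n \<in> GN" for n using ch_sub[OF that] by blast
  show "0 \<notin> set (Gch n)" if n: "n \<in> GN" for n
  proof (cases "n < K")
    case True then show ?thesis using T2 by simp
  next
    case False
    then obtain j a where "n = enc K j a" using gN_cases n by force
    moreover have "0 \<noteq> enc K j b" for b using K0 enc_ge[of K j b] by linarith
    ultimately show ?thesis by (metis gch_enc imageE list.set_map)
  qed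
  show "\<exists>!n. n \<in> GN \<and> m \<in> set (Gch n)" if "m \<in> GN" "m \<noteq> 0" for m using parent that by blast
  show "(0, m) \<in> E\<^sup>*" if "m \<in> GN" for m using reach that by blast
  show "acyclic E" by (rule acyc)
  show "case Gcp n of Some c \<Rightarrow> Gch n = [] \<and> c \<in> GN \<and> Gcp c = None \<and> Gch c \<noteq> [] \<and> Gsq c = Gsq n
                                  | None \<Rightarrow> cinst (Glb n) (Gsq n) (map Gsq (Gch n))" if "n \<in> GN" for n
    using nodes that by blast
qed


lemma path_in: "inf_path GN Gch Gcp f idx \<Longrightarrow> f k \<in> GN"
proof (induction k)
  case 0 then show ?case by (simp add: inf_path_def)
next
  case (Suc k)
  then have a: "idx k < length (Gch (f k))" "f (Suc k) = resolve Gcp (Gch (f k) ! idx k)" by (auto simp: inf_path_def)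
  have "Gch (f k) ! idx k \<in> GN" using ch_sub[OF Suc.IH[OF Suc.prems]] a(1) nth_mem by blast
  then show ?case using resolve_ok[OF pp] a(2) by simp
qed

lemma gtc: "global_trace_condition GN Gch Gsq Glb Gcp"
  unfolding global_trace_condition_def
proof (intro allI impI)
  fix f idx assume ip: "inf_path GN Gch Gcp f idx"
  have fN: "\<And>k. f k \<in> GN" using path_in[OF ip] .
  have st: "\<And>k. idx k < length (Gch (f k)) \<and> f (Suc k) = resolve Gcp (Gch (f k) ! idx k)"
    using ip by (simp add: inf_path_def)
  show "\<exists>k0 \<tau>. (\<forall>k\<ge>k0. \<tau> k |\<in>| snd (Gsq (f k)) \<and> tstep (Glb (f k)) (idx k) (\<tau> k) (\<tau> (Suc k))) \<and>
         (\<forall>m. \<exists>k\<ge>max m k0. progress (Glb (f k)) (idx k) (\<tau> k) (\<tau> (Suc k)))"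
  proof (cases "\<forall>k. f k < K")
    case True
    have stT: "idx k < length (chT (f k)) \<and> f (Suc k) = resolve cpT (chT (f k) ! idx k)" for k
    proof -
      have fk: "f k < K" using True by blast
      have i: "idx k < length (chT (f k))" using st[of k] fk by simp
      let ?c = "chT (f k) ! idx k"
      have cm: "?c \<in> set (chT (f k))" using i by simp
      have e: "f (Suc k) = resolve Gcp ?c" using st[of k] fk by simp
      have "?c < K"
      proof (rule ccontr)
        assume "\<not> ?c < K"
        then obtain j where "j < J" "?c = enc K j (rts j)" using T1[OF fk cm] by blast
        then have "f (Suc k) = enc K j (resolve (cps j) (rts j))" using e resolve_enc by simp
        then show False using True[rule_format, of "Suc k"] by simp
      qed
      then have "resolve Gcp ?c = resolve cpT ?c" by (simp add: resolve_def)
      then show ?thesis using i e by simp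
    qed
    obtain k0 \<tau> where H: "\<forall>k\<ge>k0. \<tau> k |\<in>| snd (sqT (f k)) \<and> tstep (lbT (f k)) (idx k) (\<tau> k) (\<tau> (Suc k))"
      "\<forall>m. \<exists>k\<ge>max m k0. progress (lbT (f k)) (idx k) (\<tau> k) (\<tau> (Suc k))"
      using T8[of f idx] True stT by blast
    show ?thesis using H True by (intro exI[of _ k0] exI[of _ \<tau>]) simp
  next
    case False
    then obtain k1 where k1: "\<not> f k1 < K" by blast
    then obtain j a0 where ja: "j < J" "a0 \<in> Ns j" "f k1 = enc K j a0" using gN_cases[OF fN[of k1]] by blast
    have inv: "\<exists>a. a \<in> Ns j \<and> f (k1 + k) = enc K j a" for k
    proof (induction k)
      case 0 then show ?case using ja by auto
    next
      case (Suc k)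
      then obtain a where a: "a \<in> Ns j" "f (k1 + k) = enc K j a" by blast
      have i: "idx (k1 + k) < length (chs j a)" using st[of "k1 + k"] a by simp
      have cN: "chs j a ! idx (k1 + k) \<in> Ns j" using pp_parts(3)[OF spp[OF ja(1)] a(1)] i nth_mem by blast
      have "f (k1 + Suc k) = enc K j (resolve (cps j) (chs j a ! idx (k1 + k)))"
        using st[of "k1 + k"] a i by (simp add: resolve_enc)
      then show ?case using resolve_ok[OF spp[OF ja(1)] cN] by blast
    qed
    define g where "g = (\<lambda>k. dm K (f (k1 + k)))"
    define idx' where "idx' = (\<lambda>k. idx (k1 + k))"
    have fg: "f (k1 + k) = enc K j (g k) \<and> g k \<in> Ns j" for k
      using inv[of k] unfolding g_def by auto
    have ip': "inf_path (Ns j) (chs j) (cps j) g idx'"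
      unfolding inf_path_def
    proof (intro conjI allI)
      show "g 0 \<in> Ns j" using fg[of 0] by simp
    next
      fix k
      have s: "idx (k1 + k) < length (Gch (f (k1 + k)))" "f (Suc (k1 + k)) = resolve Gcp (Gch (f (k1 + k)) ! idx (k1 + k))"
        using st by blast+
      show "idx' k < length (chs j (g k))" using s(1) fg[of k] unfolding idx'_def by simp
      have "f (k1 + Suc k) = enc K j (resolve (cps j) (chs j (g k) ! idx' k))"
        using s fg[of k] unfolding idx'_def by (simp add: resolve_enc)
      then show "g (Suc k) = resolve (cps j) (chs j (g k) ! idx' k)" using fg[of "Suc k"] by simp
    qed
    obtain k0' \<tau>' where H: "\<forall>k\<ge>k0'. \<tau>' k |\<in>| snd (sqs j (g k)) \<and> tstep (lbs j (g k)) (idx' k) (\<tau>' k) (\<tau>' (Suc k))"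
      "\<forall>m. \<exists>k\<ge>max m k0'. progress (lbs j (g k)) (idx' k) (\<tau>' k) (\<tau>' (Suc k))"
      using sgtc[OF ja(1)] ip' unfolding global_trace_condition_def by blast
    define \<tau> where "\<tau> = (\<lambda>k. \<tau>' (k - k1))"
    show ?thesis
    proof (intro exI[of _ "k1 + k0'"] exI[of _ \<tau>] conjI)
      show "\<forall>k\<ge>k1 + k0'. \<tau> k |\<in>| snd (Gsq (f k)) \<and> tstep (Glb (f k)) (idx k) (\<tau> k) (\<tau> (Suc k))"
      proof (intro allI impI)
      fix k assume k: "k1 + k0' \<le> k"
      then obtain k'' where k'': "k = k1 + k''" "k0' \<le> k''" by (metis add_le_cancel_left le_add1 le_iff_add le_trans nat_le_iff_add)
      have e1: "\<tau> k = \<tau>' k''" "\<tau> (Suc k) = \<tau>' (Suc k'')" unfolding \<tau>_def using k'' by auto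
      have e2: "Gsq (f k) = sqs j (g k'')" "Glb (f k) = lbs j (g k'')" "idx k = idx' k''"
        using fg[of k''] k'' unfolding idx'_def by auto
      show "\<tau> k |\<in>| snd (Gsq (f k)) \<and> tstep (Glb (f k)) (idx k) (\<tau> k) (\<tau> (Suc k))"
        using H(1) k'' e1 e2 by simp
      qed
    next
      show "\<forall>m. \<exists>k\<ge>max m (k1 + k0'). progress (Glb (f k)) (idx k) (\<tau> k) (\<tau> (Suc k))"
      proof
      fix m
      obtain k'' where k'': "k'' \<ge> max m k0'" "progress (lbs j (g k'')) (idx' k'') (\<tau>' k'') (\<tau>' (Suc k''))"
        using H(2) by blast
      have e1: "\<tau> (k1 + k'') = \<tau>' k''" "\<tau> (Suc (k1 + k'')) = \<tau>' (Suc k'')" unfolding \<tau>_def by auto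
      have e2: "Glb (f (k1 + k'')) = lbs j (g k'')" "idx (k1 + k'') = idx' k''"
        using fg[of k''] unfolding idx'_def by auto
      show "\<exists>k\<ge>max m (k1 + k0'). progress (Glb (f k)) (idx k) (\<tau> k) (\<tau> (Suc k))"
        using k'' e1 e2 by (intro exI[of _ "k1 + k''"]) auto
      qed
    qed
  qed
qed

lemma glue_cprov: "cprov (sqT 0)"
  unfolding cprov_def using pp gtc K0 by (intro exI[of _ GN] exI[of _ 0] exI[of _ Gch] exI[of _ Gsq] exI[of _ Glb] exI[of _ Gcp]) simp

end


type_synonym ('p,'a) pf = "nat set \<times> nat \<times> (nat \<Rightarrow> nat list) \<times> (nat \<Rightarrow> ('p,'a) seq) \<times> (nat \<Rightarrow> ('p,'a) rl) \<times> (nat \<Rightarrow> nat option)"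

definition pfok :: "('p,'a) pf \<Rightarrow> ('p,'a) seq \<Rightarrow> bool" where
  "pfok t S \<longleftrightarrow> (case t of (N, rt, ch, sq, lb, cp) \<Rightarrow>
     preproof N rt ch sq lb cp \<and> global_trace_condition N ch sq lb cp \<and> sq rt = S)"

lemma cprov_pf: "cprov S \<longleftrightarrow> (\<exists>t. pfok t S)"
  unfolding cprov_def pfok_def by auto

lemma pfok_sel: "pfok t S \<Longrightarrow> preproof (fst t) (fst (snd t)) (fst (snd (snd t))) (fst (snd (snd (snd t)))) (fst (snd (snd (snd (snd t))))) (snd (snd (snd (snd (snd t)))))
   \<and> global_trace_condition (fst t) (fst (snd (snd t))) (fst (snd (snd (snd t)))) (fst (snd (snd (snd (snd t))))) (snd (snd (snd (snd (snd t)))))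
   \<and> (fst (snd (snd (snd t)))) (fst (snd t)) = S"
  by (cases t rule: prod_cases6) (simp add: pfok_def)

lemma pf_family:
  assumes "\<And>j. j < J \<Longrightarrow> cprov (Q j)"
  obtains Ns rts chs sqs lbs cps where
    "\<And>j. j < J \<Longrightarrow> preproof (Ns j) (rts j) (chs j) (sqs j) (lbs j) (cps j) \<and> global_trace_condition (Ns j) (chs j) (sqs j) (lbs j) (cps j) \<and> sqs j (rts j) = Q j"
proof -
  have "\<forall>j. \<exists>t. j < J \<longrightarrow> pfok t (Q j)" using assms cprov_pf by blast
  then obtain T where T: "\<And>j. j < J \<Longrightarrow> pfok (T j) (Q j)" by metis
  show ?thesis
    by (rule that[of "\<lambda>j. fst (T j)" "\<lambda>j. fst (snd (T j))" "\<lambda>j. fst (snd (snd (T j)))"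
          "\<lambda>j. fst (snd (snd (snd (T j))))" "\<lambda>j. fst (snd (snd (snd (snd (T j)))))" "\<lambda>j. snd (snd (snd (snd (snd (T j)))))"])
       (use pfok_sel[OF T] in blast)
qed

lemma compose:
  assumes ci: "cinst r S Ps" and sub: "\<And>Q. Q \<in> set Ps \<Longrightarrow> cprov Q"
  shows "cprov S"
proof -
  let ?J = "length Ps"
  obtain Ns rts chs sqs lbs cps where F: "\<And>j. j < ?J \<Longrightarrow> preproof (Ns j) (rts j) (chs j) (sqs j) (lbs j) (cps j) \<and> global_trace_condition (Ns j) (chs j) (sqs j) (lbs j) (cps j) \<and> sqs j (rts j) = Ps ! j"
    using pf_family[of ?J "\<lambda>j. Ps ! j"] sub nth_mem by blast
  define chT where "chT = (\<lambda>n::nat. if n = 0 then map (\<lambda>j. enc 1 j (rts j)) [0..<?J] else [])"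
  define sqT where "sqT = (\<lambda>n::nat. S)"
  define lbT where "lbT = (\<lambda>n::nat. r)"
  define cpT where "cpT = (\<lambda>n::nat. None :: nat option)"
  have ge: "enc 1 j m \<noteq> 0" for j m using enc_ge[of 1 j m] by auto
  interpret g: glue 1 ?J Ns rts chs sqs lbs cps chT sqT lbT cpT
  proof
    show "0 < (1::nat)" by simp
    show "preproof (Ns j) (rts j) (chs j) (sqs j) (lbs j) (cps j) \<and> global_trace_condition (Ns j) (chs j) (sqs j) (lbs j) (cps j)" if "j < ?J" for j
      using F[OF that] by blast
    show "c < 1 \<or> (\<exists>j<?J. c = enc 1 j (rts j))" if "n < 1" "c \<in> set (chT n)" for n c
      using that unfolding chT_def by auto
    show "distinct (chT n)" if "n < 1" for n
      unfolding chT_def by (auto simp: distinct_map inj_on_def)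
    show "0 \<notin> set (chT n)" if "n < 1" for n
      unfolding chT_def by (auto simp: enc_def)
    show "\<exists>!n. n < 1 \<and> m \<in> set (chT n)" if "m < 1" "m \<noteq> 0" for m using that by simp
    show "\<exists>!n. n < 1 \<and> enc 1 j (rts j) \<in> set (chT n)" if "j < ?J" for j
      using that unfolding chT_def by (intro ex1I[of _ 0]) auto
    show "(0, m) \<in> {(n, m). n < 1 \<and> m < 1 \<and> m \<in> set (chT n)}\<^sup>*" if "m < 1" for m using that by simp
    have e: "{(n, m). n < (1::nat) \<and> m < 1 \<and> m \<in> set (chT n)} = {}" unfolding chT_def by (auto simp: enc_def)
    show "acyclic {(n, m). n < (1::nat) \<and> m < 1 \<and> m \<in> set (chT n)}" unfolding e acyclic_def by simp
    show "case cpT n of Some c \<Rightarrow> chT n = [] \<and> c < 1 \<and> cpT c = None \<and> chT c \<noteq> [] \<and> sqT c = sqT n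
            | None \<Rightarrow> cinst (lbT n) (sqT n) (map (gsel 1 sqT sqs) (chT n))" if "n < 1" for n
    proof -
      have "map (gsel 1 sqT sqs) (chT 0) = map (\<lambda>j. Ps ! j) [0..<?J]" unfolding chT_def using F by simp
      also have "\<dots> = Ps" by (rule map_nth)
      finally show ?thesis using that ci unfolding cpT_def lbT_def sqT_def by simp
    qed
    show "\<exists>k0 \<tau>. (\<forall>k\<ge>k0. \<tau> k |\<in>| snd (sqT (f k)) \<and> tstep (lbT (f k)) (idx k) (\<tau> k) (\<tau> (Suc k))) \<and>
              (\<forall>m. \<exists>k\<ge>max m k0. progress (lbT (f k)) (idx k) (\<tau> k) (\<tau> (Suc k)))"
      if f: "\<And>k. f k < 1" and st: "\<And>k. idx k < length (chT (f k)) \<and> f (Suc k) = resolve cpT (chT (f k) ! idx k)" for f idx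
    proof -
      have "f 0 = 0" "f 1 = 0" using f[of 0] f[of 1] by auto
      moreover have "idx 0 < ?J" "f 1 = resolve cpT (chT (f 0) ! idx 0)" using st[of 0] \<open>f 0 = 0\<close> unfolding chT_def by auto
      ultimately have "0 = enc 1 (idx 0) (rts (idx 0))" unfolding chT_def cpT_def resolve_def by simp
      then show ?thesis using ge by metis
    qed
  qed
  show ?thesis using g.glue_cprov unfolding sqT_def .
qed

lemma acyc_lt: "r \<subseteq> {(n::nat, m). n < m} \<Longrightarrow> acyclic r"
proof -
  assume r: "r \<subseteq> {(n::nat, m). n < m}"
  have "x < y" if "(x, y) \<in> r\<^sup>+" for x y
    using that
  proof (induction rule: trancl_induct)
    case (base y) then show ?case using r by auto
  next
    case (step y z) then show ?case using r by auto
  qed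
  then show ?thesis unfolding acyclic_def by blast
qed

lemma six: "n < (6::nat) \<Longrightarrow> n = 0 \<or> n = 1 \<or> n = 2 \<or> n = 3 \<or> n = 4 \<or> n = 5" by auto

lemma gadget:
  assumes hyp: "cprov ({|\<chi>|}, {|Box \<pi> \<chi>|})"
  shows "cprov ({|\<chi>|}, {|Box (Star \<pi>) \<chi>|})"
proof -
  let ?A = "Box \<pi> \<chi>"
  let ?B = "Box \<pi> (Box (Star \<pi>) \<chi>)"
  let ?R = "({|\<chi>|}, {|Box (Star \<pi>) \<chi>|})"
  have wk: "cinst RWk ({|\<chi>|}, finsert ?A {|?B|}) [({|\<chi>|}, {|?A|})]" by (rule ccommon, rule common.Wk) auto
  have sub0: "cprov ({|\<chi>|}, finsert ?A {|?B|})" using compose[OF wk] hyp by simp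
  obtain Ns rts chs sqs lbs cps where F: "\<And>j::nat. j < 1 \<Longrightarrow> preproof (Ns j) (rts j) (chs j) (sqs j) (lbs j) (cps j) \<and> global_trace_condition (Ns j) (chs j) (sqs j) (lbs j) (cps j) \<and> sqs j (rts j) = ({|\<chi>|}, finsert ?A {|?B|})"
    using pf_family[of 1 "\<lambda>j. ({|\<chi>|}, finsert ?A {|?B|})"] sub0 by blast
  define e where "e = enc 6 0 (rts 0)"
  have ege: "6 \<le> e" unfolding e_def by (rule enc_ge)
  define chT where "chT = (\<lambda>n::nat. if n = 0 then [1, 2] else if n = 2 then [e, 3] else if n = 3 then [4] else if n = 4 then [5::nat] else [])"
  define sqT where "sqT = (\<lambda>n::nat. if n = 0 then ?R else if n = 1 then ({|\<chi>|}, {|\<chi>|}) else if n = 2 then ({|\<chi>|}, {|?B|})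
     else if n = 3 then (finsert ?A {|\<chi>|}, {|?B|}) else if n = 4 then (Box \<pi> |`| {|\<chi>|}, finsert ?B {||}) else ?R)"
  define lbT where "lbT = (\<lambda>n::nat. if n = 0 then RCs \<pi> \<chi> else if n = 1 then RAx else if n = 2 then RCut ?A
     else if n = 3 then RWk else if n = 4 then RBox \<pi> (Box (Star \<pi>) \<chi>) else RAx)"
  define cpT where "cpT = (\<lambda>n::nat. if n = 5 then Some (0::nat) else None)"
  have ET: "{(n, m). n < 6 \<and> m < 6 \<and> m \<in> set (chT n)} \<subseteq> {(n::nat, m). n < m}"
    using ege unfolding chT_def by (auto split: if_splits)
  interpret g: glue 6 1 Ns rts chs sqs lbs cps chT sqT lbT cpT
  proof
    show "0 < (6::nat)" by simp
    show "preproof (Ns j) (rts j) (chs j) (sqs j) (lbs j) (cps j) \<and> global_trace_condition (Ns j) (chs j) (sqs j) (lbs j) (cps j)" if "j < 1" for j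
      using F[OF that] by blast
    show "c < 6 \<or> (\<exists>j<1. c = enc 6 j (rts j))" if "n < 6" "c \<in> set (chT n)" for n c
      using that unfolding chT_def e_def by (auto split: if_splits)
    show "distinct (chT n)" if "n < 6" for n using ege unfolding chT_def by auto
    show "0 \<notin> set (chT n)" if "n < 6" for n using ege unfolding chT_def by auto
    show "\<exists>!n. n < 6 \<and> m \<in> set (chT n)" if m: "m < 6" "m \<noteq> 0" for m
    proof -
      have mm: "m = 1 \<or> m = 2 \<or> m = 3 \<or> m = 4 \<or> m = 5" using m by auto
      define p where "p = (if m \<le> 2 then 0 else m - 1)"
      have par: "m \<in> set (chT n) \<longleftrightarrow> n = p" if n: "n < 6" for n
        using six[OF n] mm ege unfolding chT_def p_def by (elim disjE; elim disjE; simp)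
      have "p < 6" unfolding p_def using m by auto
      then show ?thesis using par by (intro ex1I[of _ p]) auto
    qed
    show "\<exists>!n. n < 6 \<and> enc 6 j (rts j) \<in> set (chT n)" if "j < 1" for j
      using that ege unfolding chT_def e_def[symmetric] by (intro ex1I[of _ 2]) (auto simp: e_def dest!: six)
    show "(0, m) \<in> {(n, m). n < 6 \<and> m < 6 \<and> m \<in> set (chT n)}\<^sup>*" if "m < 6" for m
    proof -
      let ?E = "{(n, m). n < 6 \<and> m < (6::nat) \<and> m \<in> set (chT n)}"
      have ed: "(0,1) \<in> ?E" "(0,2) \<in> ?E" "(2,3) \<in> ?E" "(3,4) \<in> ?E" "(4,5) \<in> ?E" by (simp_all add: chT_def)
      have "(0,0) \<in> ?E\<^sup>*" by simp
      moreover have "(0,1) \<in> ?E\<^sup>*" using ed(1) by (rule r_into_rtrancl)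
      moreover have "(0,2) \<in> ?E\<^sup>*" using ed(2) by (rule r_into_rtrancl)
      moreover have "(0,3) \<in> ?E\<^sup>*" using ed by (meson r_into_rtrancl rtrancl_trans)
      moreover have "(0,4) \<in> ?E\<^sup>*" using ed by (meson r_into_rtrancl rtrancl_trans)
      moreover have "(0,5) \<in> ?E\<^sup>*" using ed by (meson r_into_rtrancl rtrancl_trans)
      ultimately show ?thesis using six[OF that] by auto
    qed
    show "acyclic {(n, m). n < 6 \<and> m < 6 \<and> m \<in> set (chT n)}" by (rule acyc_lt[OF ET])
    show "case cpT n of Some c \<Rightarrow> chT n = [] \<and> c < 6 \<and> cpT c = None \<and> chT c \<noteq> [] \<and> sqT c = sqT n
            | None \<Rightarrow> cinst (lbT n) (sqT n) (map (gsel 6 sqT sqs) (chT n))" if "n < 6" for n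
    proof -
      have gs: "gsel 6 sqT sqs e = ({|\<chi>|}, finsert ?A {|?B|})" using F[of 0] unfolding e_def by simp
      have c0: "cinst (RCs \<pi> \<chi>) ?R [({|\<chi>|}, {|\<chi>|}), ({|\<chi>|}, {|?B|})]"
        using cinst.Cs[of \<pi> \<chi> "{|\<chi>|}" "{||}"] by simp
      have c1: "cinst RAx ({|\<chi>|}, {|\<chi>|}) []" by (rule ccommon, rule common.Ax) auto
      have c2: "cinst (RCut ?A) ({|\<chi>|}, {|?B|}) [({|\<chi>|}, finsert ?A {|?B|}), (finsert ?A {|\<chi>|}, {|?B|})]"
        by (rule ccommon, rule common.Cut)
      have c3: "cinst RWk (finsert ?A {|\<chi>|}, {|?B|}) [(Box \<pi> |`| {|\<chi>|}, finsert ?B {||})]"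
        by (rule ccommon, rule common.Wk) auto
      have c4: "cinst (RBox \<pi> (Box (Star \<pi>) \<chi>)) (Box \<pi> |`| {|\<chi>|}, finsert ?B {||}) [({|\<chi>|}, finsert (Box (Star \<pi>) \<chi>) (BoxC \<pi> |`| {||}))]"
        by (rule ccommon, rule common.BoxR)
      from six[OF that] show ?thesis
      proof (elim disjE)
        assume "n = 0" then show ?thesis using c0 ege by (simp add: chT_def sqT_def lbT_def cpT_def gsel_def)
      next
        assume "n = 1" then show ?thesis using c1 by (simp add: chT_def sqT_def lbT_def cpT_def)
      next
        assume "n = 2" then show ?thesis using c2 gs ege by (simp add: chT_def sqT_def lbT_def cpT_def)
      next
        assume "n = 3" then show ?thesis using c3 by (simp add: chT_def sqT_def lbT_def cpT_def)
      next
        assume "n = 4" then show ?thesis using c4 by (simp add: chT_def sqT_def lbT_def cpT_def)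
      next
        assume "n = 5" then show ?thesis by (simp add: chT_def sqT_def lbT_def cpT_def)
      qed
    qed
    show "\<exists>k0 \<tau>. (\<forall>k\<ge>k0. \<tau> k |\<in>| snd (sqT (f k)) \<and> tstep (lbT (f k)) (idx k) (\<tau> k) (\<tau> (Suc k))) \<and>
              (\<forall>m. \<exists>k\<ge>max m k0. progress (lbT (f k)) (idx k) (\<tau> k) (\<tau> (Suc k)))"
      if f: "\<And>k. f k < 6" and st: "\<And>k. idx k < length (chT (f k)) \<and> f (Suc k) = resolve cpT (chT (f k) ! idx k)" for f idx
    proof -
      have rs: "resolve cpT m = (if m = 5 then 0 else m)" for m by (simp add: resolve_def cpT_def)
      have n1: "f k \<noteq> 1" "f k \<noteq> 5" for k using st[of k] by (auto simp: chT_def)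
      have t0: "idx k = 1 \<and> f (Suc k) = 2" if "f k = 0" for k
      proof -
        have "idx k < 2" "f (Suc k) = resolve cpT ([1, 2] ! idx k)" using st[of k] that by (auto simp: chT_def)
        moreover have "idx k \<noteq> 0" using calculation n1[of "Suc k"] rs by (cases "idx k") auto
        ultimately show ?thesis using rs by (cases "idx k") auto
      qed
      have t2: "idx k = 1 \<and> f (Suc k) = 3" if "f k = 2" for k
      proof -
        have "idx k < 2" "f (Suc k) = resolve cpT ([e, 3] ! idx k)" using st[of k] that by (auto simp: chT_def)
        moreover have "idx k \<noteq> 0" using calculation f[of "Suc k"] rs ege by (cases "idx k") auto
        ultimately show ?thesis using rs by (cases "idx k") auto
      qed
      have t3: "idx k = 0 \<and> f (Suc k) = 4" if "f k = 3" for k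
        using st[of k] that rs by (auto simp: chT_def)
      have t4: "idx k = 0 \<and> f (Suc k) = 0" if "f k = 4" for k
        using st[of k] that rs by (auto simp: chT_def)
      have cs: "f k = 0 \<or> f k = 2 \<or> f k = 3 \<or> f k = 4" for k using six[OF f[of k]] n1[of k] by auto
      define \<tau> where "\<tau> = (\<lambda>k. if f k = 0 then Box (Star \<pi>) \<chi> else ?B)"
      have A: "\<tau> k |\<in>| snd (sqT (f k)) \<and> tstep (lbT (f k)) (idx k) (\<tau> k) (\<tau> (Suc k))" for k
        using cs[of k] t0[of k] t2[of k] t3[of k] t4[of k] unfolding \<tau>_def by (auto simp: sqT_def lbT_def)
      have Z: "\<exists>k\<ge>m. f k = 0" for m
        using cs[of m] t4[of m] t3[of m] t4[of "Suc m"] t2[of m] t3[of "Suc m"] t4[of "Suc (Suc m)"]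
        by (elim disjE) (metis le_refl le_SucI)+
      have B: "\<exists>k\<ge>max m 0. progress (lbT (f k)) (idx k) (\<tau> k) (\<tau> (Suc k))" for m
      proof -
        obtain k where k: "k \<ge> m" "f k = 0" using Z by blast
        then show ?thesis using t0[of k] unfolding \<tau>_def by (intro exI[of _ k]) (auto simp: lbT_def)
      qed
      show ?thesis using A B by blast
    qed
  qed
  show ?thesis using g.glue_cprov unfolding sqT_def by simp
qed

interpretation cp: prov cprov
proof
  fix r S Ps assume c: "common r S Ps" and h: "\<And>Q. Q \<in> set Ps \<Longrightarrow> cprov Q"
  show "cprov S" by (rule compose[OF ccommon[OF c] h])
next
  fix \<chi> \<pi> assume "cprov ({|\<chi>|}, {|Box \<pi> \<chi>|})"
  then show "cprov ({|\<chi>|}, {|Box (Star \<pi>) \<chi>|})" by (rule gadget)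
qed


theorem mainTheorem6:
  fixes S :: "('p, 'a) seq"
  shows "(gprov S \<longleftrightarrow> cprov S)
       \<and> (cprov S \<longleftrightarrow> valid TYPE(nat) S)
       \<and> (cprov S \<longrightarrow> valid TYPE('w) S)"
proof -
  have 1: "gprov S \<longleftrightarrow> valid TYPE(nat) S" by (rule gprov_valid_iff)
  have 2: "cprov S \<longleftrightarrow> valid TYPE(nat) S" using cprov_sound[of S] cp.completeness[of S] by blast
  have 3: "cprov S \<longrightarrow> valid TYPE('w) S" using cprov_sound[of S] by blast
  show ?thesis using 1 2 3 by blast
qed

end
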